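(* Assume that $\kappa_{\mathcal H}(X_i,X_i)<\infty$ almost surely for every $i$, and that for every $y\in\mathcal Y$ the map $u\mapsto\ell(y,u)$ is convex and twice continuously differentiable with $u\mapsto\partial_2\ell(y,u)$ being $\beta_{\ell;2}$-Lipschitz continuous. Then for every $z'\in\mathcal Y$, $\mathbf I_{\hat f}(X_{n+1},z')=\sum_{i=1}^{n+1}[I_{\hat f}(X_{n+1},z')]_iK_{X_i}$, where $$I_{\hat f}(X_{n+1},z')=-\frac1{n+1}\partial_2\ell\big(z',\hat a_\lambda(\mathbf u)^TK_{\bullet,n+1}\big)\big[\nabla_2^2\hat R_\lambda(\mathbf u;\hat a_\lambda(\mathbf u))\big]^+K_{\bullet,n+1}\in\mathbb R^{n+1},$$ and $\hat a_\lambda(\mathbf u)$ is the unique minimizer of $a\mapsto\hat R_\lambda(\mathbf u;a)$ in the range of $K$.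
   Context: Data $D=\{(X_1,Y_1),\dots,(X_n,Y_n)\}\subset\mathcal X\times\mathcal Y$ ($\mathcal X\subset\mathbb R^d$, $\mathcal Y\subset\mathbb R$) and $X_{n+1}$; $\mathcal H$ an RKHS with kernel $\kappa_{\mathcal H}$, $K_x=\kappa_{\mathcal H}(x,\cdot)$, Gram matrix $K=(\kappa_{\mathcal H}(X_i,X_j))_{1\le i,j\le n+1}$ with $j$-th column $K_{\bullet,j}$, $\mathcal A=\mathrm{span}\{K_{X_1},\dots,K_{X_{n+1}}\}$. Loss $\ell$, derivatives $\partial_2,\partial_2^2$ in its second argument, $\lambda>0$, fixed $y,z\in\mathcal Y$, $\mathbf u=(1,\dots,1,1,0)\in\mathbb R^{n+2}$. For $v\in\mathbb R^{n+2}$, $f\in\mathcal H$: $\hat{\mathbf R}_\lambda(v;f)=\frac1{n+1}\sum_{i=1}^nv_i\ell(Y_i,f(X_i))+\frac{v_{n+1}}{n+1}\ell(z,f(X_{n+1}))+\frac{v_{n+2}}{n+1}\ell(y,f(X_{n+1}))+\lambda\|f\|_{\mathcal H}^2$, and for $a\in\mathbb R^{n+1}$: $\hat R_\lambda(v;a)=\hat{\mathbf R}_\lambda(v;\sum_ia_iK_{X_i})=\frac1{n+1}\sum_{i=1}^nv_i\ell(Y_i,a^TK_{\bullet,i})+\frac{v_{n+1}}{n+1}\ell(z,a^TK_{\bullet,n+1})+\frac{v_{n+2}}{n+1}\ell(y,a^TK_{\bullet,n+1})+\lambda a^TKa$; $\nabla^2_2\hat R_\lambda(v;a)$ is its Hessian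 in $a$, and $[\cdot]^+$ its inverse on the range of $K$ (Moore–Penrose pseudo-inverse). $\hat f_{\lambda;D^z}$ is the minimizer of $\hat{\mathbf R}_\lambda(\mathbf u;\cdot)$ over $\mathcal H$. The operator $\partial_2^2\hat{\mathbf R}_\lambda(v;f)=\frac1{n+1}\sum_{i=1}^nv_i\partial_2^2\ell(Y_i,f(X_i))K_{X_i}\otimes K_{X_i}+\frac{v_{n+1}}{n+1}\partial_2^2\ell(z,f(X_{n+1}))K_{X_{n+1}}\otimes K_{X_{n+1}}+\frac{v_{n+2}}{n+1}\partial_2^2\ell(y,f(X_{n+1}))K_{X_{n+1}}\otimes K_{X_{n+1}}+2\lambda\mathrm{Id}$ (with $(g\otimes g)h=\langle g,h\rangle_{\mathcal H}g$) is the second Fréchet differential of $\hat{\mathbf R}_\lambda(v;\cdot)$, and $[\cdot]^+$ is the inverse of its restriction to $\mathcal A$. Finally $\mathbf I_{\hat f}(X_{n+1},z')=-\frac1{n+1}\partial_2\ell(z',\hat f_{\lambda;D^z}(X_{n+1}))[\partial_2^2\hat{\mathbf R}_\lambda(\mathbf u;\hat f_{\lambda;D^z})]^+K_{X_{n+1}}$. *)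

theory Defs
  imports "HOL-Analysis.Convex" "HOL-Analysis.Lipschitz" "Jordan_Normal_Form.Matrix"
begin

(* Conventions.
   - The RKHS H is modelled abstractly as a real Hilbert space 'h together with the
     canonical feature map Kx : 'x => 'h, Kx x = kappa_H(x, .).  The reproducing
     property is built in: the value of f in H at x is  f(x) = <f, Kx x>_H.
   - Data are 1-based: X 1, ..., X (n+1) and Y 1, ..., Y n; weight vectors
     v in R^(n+2) are functions nat => real indexed 1..n+2.
   - Finite-dimensional vectors/matrices use Jordan_Normal_Form ('a vec, 'a mat),
     which are 0-based: row/column j of the Gram matrix corresponds to X (j+1). *)

definition evalH :: "'h::real_inner \<Rightarrow> ('x \<Rightarrow> 'h) \<Rightarrow> 'x \<Rightarrow> real" where
  "evalH f Kx x = inner f (Kx x)"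

definition kern :: "('x \<Rightarrow> 'h::real_inner) \<Rightarrow> 'x \<Rightarrow> 'x \<Rightarrow> real" where
  "kern Kx x x' = inner (Kx x) (Kx x')"

definition gram :: "('x \<Rightarrow> 'h::real_inner) \<Rightarrow> (nat \<Rightarrow> 'x) \<Rightarrow> nat \<Rightarrow> real mat" where
  "gram Kx X n = mat (n+1) (n+1) (\<lambda>(i,j). kern Kx (X (i+1)) (X (j+1)))"

definition uvec :: "nat \<Rightarrow> nat \<Rightarrow> real" where
  "uvec n i = (if i = n + 2 then 0 else 1)"

definition Rhat :: "(real \<Rightarrow> real \<Rightarrow> real) \<Rightarrow> real \<Rightarrow> nat \<Rightarrow> (nat \<Rightarrow> 'x) \<Rightarrow> (nat \<Rightarrow> real)
     \<Rightarrow> ('x \<Rightarrow> 'h::real_inner) \<Rightarrow> real \<Rightarrow> real \<Rightarrow> (nat \<Rightarrow> real) \<Rightarrow> real vec \<Rightarrow> real" where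
  "Rhat l lam n X Y Kx y z v a =
     (let K = gram Kx X n in
       (1 / real (n+1)) * (\<Sum>i=1..n. v i * l (Y i) (scalar_prod a (col K (i-1))))
       + v (n+1) / real (n+1) * l z (scalar_prod a (col K n))
       + v (n+2) / real (n+1) * l y (scalar_prod a (col K n))
       + lam * scalar_prod a (K *\<^sub>v a))"

definition Rbold :: "(real \<Rightarrow> real \<Rightarrow> real) \<Rightarrow> real \<Rightarrow> nat \<Rightarrow> (nat \<Rightarrow> 'x) \<Rightarrow> (nat \<Rightarrow> real)
     \<Rightarrow> ('x \<Rightarrow> 'h::real_inner) \<Rightarrow> real \<Rightarrow> real \<Rightarrow> (nat \<Rightarrow> real) \<Rightarrow> 'h \<Rightarrow> real" where
  "Rbold l lam n X Y Kx y z v f =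
       (1 / real (n+1)) * (\<Sum>i=1..n. v i * l (Y i) (evalH f Kx (X i)))
       + v (n+1) / real (n+1) * l z (evalH f Kx (X (n+1)))
       + v (n+2) / real (n+1) * l y (evalH f Kx (X (n+1)))
       + lam * (norm f)\<^sup>2"

definition hessian :: "nat \<Rightarrow> (real vec \<Rightarrow> real) \<Rightarrow> real vec \<Rightarrow> real mat" where
  "hessian N g a = mat N N (\<lambda>(j,k).
      deriv (\<lambda>s. deriv (\<lambda>t. g (a + t \<cdot>\<^sub>v unit_vec N j + s \<cdot>\<^sub>v unit_vec N k)) 0) 0)"

definition mp_pinv :: "nat \<Rightarrow> real mat \<Rightarrow> real mat" where
  "mp_pinv N A = (THE B. B \<in> carrier_mat N N \<and> A * B * A = A \<and> B * A * B = B
                       \<and> transpose_mat (A * B) = A * B \<and> transpose_mat (B * A) = B * A)"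

definition mat_range :: "nat \<Rightarrow> real mat \<Rightarrow> real vec set" where
  "mat_range N K = {K *\<^sub>v c | c. c \<in> carrier_vec N}"

definition ahat :: "(real \<Rightarrow> real \<Rightarrow> real) \<Rightarrow> real \<Rightarrow> nat \<Rightarrow> (nat \<Rightarrow> 'x) \<Rightarrow> (nat \<Rightarrow> real)
     \<Rightarrow> ('x \<Rightarrow> 'h::real_inner) \<Rightarrow> real \<Rightarrow> real \<Rightarrow> real vec" where
  "ahat l lam n X Y Kx y z =
     (THE a. a \<in> mat_range (n+1) (gram Kx X n) \<and>
        (\<forall>b \<in> mat_range (n+1) (gram Kx X n).
            Rhat l lam n X Y Kx y z (uvec n) a \<le> Rhat l lam n X Y Kx y z (uvec n) b))"

definition Ivec :: "(real \<Rightarrow> real \<Rightarrow> real) \<Rightarrow> real \<Rightarrow> nat \<Rightarrow> (nat \<Rightarrow> 'x) \<Rightarrow> (nat \<Rightarrow> real)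
     \<Rightarrow> ('x \<Rightarrow> 'h::real_inner) \<Rightarrow> real \<Rightarrow> real \<Rightarrow> real \<Rightarrow> real vec" where
  "Ivec l lam n X Y Kx y z z' =
     (let K = gram Kx X n; a = ahat l lam n X Y Kx y z in
       (- (1 / real (n+1)) * deriv (l z') (scalar_prod a (col K n)))
         \<cdot>\<^sub>v (mp_pinv (n+1) (hessian (n+1) (Rhat l lam n X Y Kx y z (uvec n)) a) *\<^sub>v col K n))"

definition fhat :: "(real \<Rightarrow> real \<Rightarrow> real) \<Rightarrow> real \<Rightarrow> nat \<Rightarrow> (nat \<Rightarrow> 'x) \<Rightarrow> (nat \<Rightarrow> real)
     \<Rightarrow> ('x \<Rightarrow> 'h::real_inner) \<Rightarrow> real \<Rightarrow> real \<Rightarrow> 'h" where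
  "fhat l lam n X Y Kx y z =
     (THE f. \<forall>g. Rbold l lam n X Y Kx y z (uvec n) f \<le> Rbold l lam n X Y Kx y z (uvec n) g)"

(* second Frechet differential partial_2^2 bold \hat R_lambda(v; f), as an operator on H
   ((g (x) g) h = <g,h> g) *)
definition hess_op :: "(real \<Rightarrow> real \<Rightarrow> real) \<Rightarrow> real \<Rightarrow> nat \<Rightarrow> (nat \<Rightarrow> 'x) \<Rightarrow> (nat \<Rightarrow> real)
     \<Rightarrow> ('x \<Rightarrow> 'h::real_inner) \<Rightarrow> real \<Rightarrow> real \<Rightarrow> (nat \<Rightarrow> real) \<Rightarrow> 'h \<Rightarrow> 'h \<Rightarrow> 'h" where
  "hess_op l lam n X Y Kx y z v f h =
       (1 / real (n+1)) *\<^sub>R (\<Sum>i=1..n. (v i * deriv (deriv (l (Y i))) (evalH f Kx (X i))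
                                          * inner (Kx (X i)) h) *\<^sub>R Kx (X i))
       + (v (n+1) / real (n+1) * deriv (deriv (l z)) (evalH f Kx (X (n+1)))
            * inner (Kx (X (n+1))) h) *\<^sub>R Kx (X (n+1))
       + (v (n+2) / real (n+1) * deriv (deriv (l y)) (evalH f Kx (X (n+1)))
            * inner (Kx (X (n+1))) h) *\<^sub>R Kx (X (n+1))
       + (2 * lam) *\<^sub>R h"

(* [T]^+ h : inverse of the restriction of T to the subspace S, applied to h *)
definition restr_inv :: "('h \<Rightarrow> 'h) \<Rightarrow> 'h set \<Rightarrow> 'h \<Rightarrow> 'h" where
  "restr_inv T S h = (THE g. g \<in> S \<and> T g = h)"

definition Ibold :: "(real \<Rightarrow> real \<Rightarrow> real) \<Rightarrow> real \<Rightarrow> nat \<Rightarrow> (nat \<Rightarrow> 'x) \<Rightarrow> (nat \<Rightarrow> real)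
     \<Rightarrow> ('x \<Rightarrow> 'h::real_inner) \<Rightarrow> real \<Rightarrow> real \<Rightarrow> real \<Rightarrow> 'h" where
  "Ibold l lam n X Y Kx y z z' =
     (let f = fhat l lam n X Y Kx y z in
       (- (1 / real (n+1)) * deriv (l z') (evalH f Kx (X (n+1))))
         *\<^sub>R restr_inv (hess_op l lam n X Y Kx y z (uvec n) f)
                       (span (Kx ` X ` {1..n+1})) (Kx (X (n+1))))"

end

theory Submission
  imports Defs "Jordan_Normal_Form.Determinant"
begin


lemma mat_eq_vecI:
  fixes A B :: "'a::comm_ring_1 mat"
  assumes A: "A \<in> carrier_mat nr nc" and B: "B \<in> carrier_mat nr nc"
    and eq: "\<And>v. v \<in> carrier_vec nc \<Longrightarrow> A *\<^sub>v v = B *\<^sub>v v"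
  shows "A = B"
proof (rule eq_matI)
  fix i j assume i: "i < dim_row B" and j: "j < dim_col B"
  have "(A *\<^sub>v unit_vec nc j) $ i = (B *\<^sub>v unit_vec nc j) $ i" using eq by simp
  thus "A $$ (i,j) = B $$ (i,j)" using A B i j by simp
qed (use A B in auto)

lemma col_as_mult:
  fixes A :: "'a::comm_ring_1 mat"
  assumes A: "A \<in> carrier_mat n n" and k: "k < n"
  shows "col A k = A *\<^sub>v unit_vec n k"
  by (rule eq_vecI) (use A k in auto)

lemma sym_scalar:
  fixes A :: "'a::comm_ring_1 mat"
  assumes A: "A \<in> carrier_mat n n" and s: "transpose_mat A = A"
    and x: "x \<in> carrier_vec n" and y: "y \<in> carrier_vec n"
  shows "(A *\<^sub>v x) \<bullet> y = x \<bullet> (A *\<^sub>v y)"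
  using transpose_vec_mult_scalar[OF A y x] s by simp

lemma self_scalar_zero:
  fixes r :: "real vec"
  assumes r: "r \<in> carrier_vec n" and z: "r \<bullet> r = 0"
  shows "r = 0\<^sub>v n"
proof (rule eq_vecI)
  have "(\<Sum>i\<in>{0..<n}. r $ i * r $ i) = 0" using z r by (simp add: scalar_prod_def)
  hence "\<forall>i\<in>{0..<n}. r $ i * r $ i = 0" by (subst sum_nonneg_eq_0_iff[symmetric]) auto
  thus "\<And>i. i < dim_vec (0\<^sub>v n) \<Longrightarrow> r $ i = 0\<^sub>v n $ i" by auto
qed (use r in auto)

lemma self_scalar_pos:
  fixes r :: "real vec"
  assumes r: "r \<in> carrier_vec n" and nz: "r \<noteq> 0\<^sub>v n"
  shows "r \<bullet> r > 0"
proof -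
  have "r \<bullet> r \<ge> 0" by (simp add: scalar_prod_def sum_nonneg)
  thus ?thesis using self_scalar_zero[OF r] nz by fastforce
qed

lemma vsmult_zero[simp]: "(t::'a::comm_ring_1) \<cdot>\<^sub>v 0\<^sub>v n = 0\<^sub>v n" by (rule eq_vecI) auto

lemma add_zero_smult[simp]: "x \<in> carrier_vec n \<Longrightarrow> r \<in> carrier_vec n \<Longrightarrow> x + (0::'a::comm_ring_1) \<cdot>\<^sub>v r = x"
  by (rule eq_vecI) auto

lemma smult_mat_vec_assoc:
  fixes M :: "'a::comm_ring_1 mat"
  assumes M: "M \<in> carrier_mat nr nc" and x: "x \<in> carrier_vec nc"
  shows "(a \<cdot>\<^sub>m M) *\<^sub>v x = a \<cdot>\<^sub>v (M *\<^sub>v x)"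
  by (rule eq_vecI) (use M x in \<open>auto simp: scalar_prod_def sum_distrib_left mult_ac\<close>)

definition outer :: "nat \<Rightarrow> real vec \<Rightarrow> real mat" where
  "outer n r = mat n n (\<lambda>(i,j). r$i * r$j)"

lemma outer_mult:
  assumes r: "r \<in> carrier_vec n" and x: "x \<in> carrier_vec n"
  shows "outer n r *\<^sub>v x = (r \<bullet> x) \<cdot>\<^sub>v r"
  by (rule eq_vecI) (use r x in \<open>auto simp: outer_def scalar_prod_def sum_distrib_left mult_ac\<close>)


lemma proj_exists_aux:
  fixes A :: "real mat"
  assumes A: "A \<in> carrier_mat n n"
  shows "k \<le> n \<Longrightarrow> \<exists>P\<in>carrier_mat n n. transpose_mat P = P \<and> P * P = P
          \<and> (\<forall>j<k. P *\<^sub>v col A j = col A j)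
          \<and> (\<forall>x\<in>carrier_vec n. \<exists>c\<in>carrier_vec n. P *\<^sub>v x = A *\<^sub>v c)"
proof (induction k)
  case 0
  show ?case
    by (rule bexI[of _ "0\<^sub>m n n"]) (use A in \<open>auto intro!: bexI[of _ "0\<^sub>v n"]\<close>)
next
  case (Suc k)
  then obtain P where P: "P \<in> carrier_mat n n" and Ps: "transpose_mat P = P" and PP: "P * P = P"
    and Pc: "\<forall>j<k. P *\<^sub>v col A j = col A j"
    and Pr: "\<forall>x\<in>carrier_vec n. \<exists>c\<in>carrier_vec n. P *\<^sub>v x = A *\<^sub>v c" by auto
  have kn: "k < n" using Suc by auto
  define w where "w = col A k"
  have w: "w \<in> carrier_vec n" using A kn by (simp add: w_def)
  define r where "r = w - P *\<^sub>v w"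
  have r: "r \<in> carrier_vec n" using w P by (simp add: r_def)
  have PPv: "P *\<^sub>v (P *\<^sub>v x) = P *\<^sub>v x" if "x \<in> carrier_vec n" for x
    using that P PP assoc_mult_mat_vec[OF P P that] by simp
  have Pr0: "P *\<^sub>v r = 0\<^sub>v n"
    unfolding r_def using P w PPv[OF w] by (simp add: mult_minus_distrib_mat_vec)
  have rP0: "r \<bullet> (P *\<^sub>v y) = 0" if y: "y \<in> carrier_vec n" for y
  proof -
    have "r \<bullet> (P *\<^sub>v y) = (P *\<^sub>v r) \<bullet> y" using sym_scalar[OF P Ps r y] by simp
    also have "\<dots> = 0" using Pr0 y by simp
    finally show ?thesis .
  qed
  obtain cw where cw: "cw \<in> carrier_vec n" and cwe: "P *\<^sub>v w = A *\<^sub>v cw" using Pr w by auto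
  show ?case
  proof (cases "r = 0\<^sub>v n")
    case True
    have "P *\<^sub>v w = w"
    proof (rule eq_vecI)
      fix i assume "i < dim_vec w"
      hence "r $ i = 0" using True w by simp
      thus "(P *\<^sub>v w) $ i = w $ i" using \<open>i < dim_vec w\<close> w P by (simp add: r_def)
    qed (use P w in auto)
    hence "\<forall>j<Suc k. P *\<^sub>v col A j = col A j" using Pc by (auto simp: w_def less_Suc_eq)
    thus ?thesis using P Ps PP Pr by blast
  next
    case False
    define rr where "rr = r \<bullet> r"
    have rr: "rr > 0" using self_scalar_pos[OF r False] by (simp add: rr_def)
    define P' where "P' = P + (1/rr) \<cdot>\<^sub>m outer n r"
    have P': "P' \<in> carrier_mat n n" using P by (simp add: P'_def outer_def)
    have act: "P' *\<^sub>v x = P *\<^sub>v x + ((r \<bullet> x) / rr) \<cdot>\<^sub>v r" if x: "x \<in> carrier_vec n" for x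
    proof -
      have "P' *\<^sub>v x = P *\<^sub>v x + ((1/rr) \<cdot>\<^sub>m outer n r) *\<^sub>v x"
        unfolding P'_def using P x by (simp add: add_mult_distrib_mat_vec outer_def)
      also have "((1/rr) \<cdot>\<^sub>m outer n r) *\<^sub>v x = (1/rr) \<cdot>\<^sub>v (outer n r *\<^sub>v x)"
        using x by (simp add: outer_def smult_mat_vec_assoc[of _ n n])
      also have "\<dots> = ((r \<bullet> x) / rr) \<cdot>\<^sub>v r" using outer_mult[OF r x] by (simp add: smult_smult_assoc)
      finally show ?thesis .
    qed
    have P'sym: "transpose_mat P' = P'"
    proof (rule eq_matI)
      fix i j assume "i < dim_row P'" "j < dim_col P'"
      hence ij: "i < n" "j < n" using P' by auto
      have "P $$ (j,i) = P $$ (i,j)" using ij P arg_cong[OF Ps, of "\<lambda>M. M $$ (i,j)"] by simp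
      thus "transpose_mat P' $$ (i, j) = P' $$ (i, j)" using ij P
        by (simp add: P'_def outer_def)
    qed (use P' in auto)
    have P'P': "P' * P' = P'"
    proof (rule mat_eq_vecI[of _ n n])
      fix x :: "real vec" assume x: "x \<in> carrier_vec n"
      define t where "t = (r \<bullet> x) / rr"
      have z: "P' *\<^sub>v x = P *\<^sub>v x + t \<cdot>\<^sub>v r" using act[OF x] by (simp add: t_def)
      have zc: "P *\<^sub>v x + t \<cdot>\<^sub>v r \<in> carrier_vec n" using P x r by simp
      have "P *\<^sub>v (P *\<^sub>v x + t \<cdot>\<^sub>v r) = P *\<^sub>v x"
        using P x r PPv[OF x] Pr0 by (simp add: mult_add_distrib_mat_vec mult_mat_vec)
      moreover have "r \<bullet> (P *\<^sub>v x + t \<cdot>\<^sub>v r) = t * rr"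
        using P x r rP0[OF x] by (simp add: scalar_prod_add_distrib rr_def)
      ultimately have "P' *\<^sub>v (P' *\<^sub>v x) = P' *\<^sub>v x"
        unfolding z using act[OF zc] rr by simp
      thus "(P' * P') *\<^sub>v x = P' *\<^sub>v x" using assoc_mult_mat_vec[OF P' P' x] by simp
    qed (use P' in auto)
    have P'c: "\<forall>j<Suc k. P' *\<^sub>v col A j = col A j"
    proof (intro allI impI)
      fix j assume j: "j < Suc k"
      show "P' *\<^sub>v col A j = col A j"
      proof (cases "j < k")
        case True
        have cj: "col A j \<in> carrier_vec n" using A by (simp add: col_def)
        have "r \<bullet> col A j = 0" using rP0[OF cj] Pc True by simp
        thus ?thesis using act[OF cj] Pc True cj r by simp
      next
        case False
        hence jk: "j = k" using j by simp
        have "r \<bullet> (w - P *\<^sub>v w) = r \<bullet> w - r \<bullet> (P *\<^sub>v w)"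
          by (rule scalar_prod_minus_distrib[OF r w]) (use P w in simp)
        hence "r \<bullet> r = r \<bullet> w - r \<bullet> (P *\<^sub>v w)" unfolding r_def[symmetric] .
        hence rw: "r \<bullet> w = rr" using rP0[OF w] by (simp add: rr_def)
        have "P' *\<^sub>v w = P *\<^sub>v w + r" using act[OF w] rw rr by simp
        also have "\<dots> = w"
          by (rule eq_vecI) (use P w in \<open>auto simp: r_def\<close>)
        finally show ?thesis using jk by (simp add: w_def)
      qed
    qed
    have P'r: "\<forall>x\<in>carrier_vec n. \<exists>c\<in>carrier_vec n. P' *\<^sub>v x = A *\<^sub>v c"
    proof
      fix x :: "real vec" assume x: "x \<in> carrier_vec n"
      obtain c where c: "c \<in> carrier_vec n" and ce: "P *\<^sub>v x = A *\<^sub>v c" using Pr x by auto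
      define t where "t = (r \<bullet> x) / rr"
      have "r = A *\<^sub>v (unit_vec n k - cw)"
        unfolding r_def w_def using A kn cw cwe[unfolded w_def]
        by (simp add: mult_minus_distrib_mat_vec col_as_mult[OF A kn])
      hence "P' *\<^sub>v x = A *\<^sub>v (c + t \<cdot>\<^sub>v (unit_vec n k - cw))"
        using act[OF x] ce A c cw by (simp add: t_def mult_add_distrib_mat_vec mult_mat_vec)
      moreover have "c + t \<cdot>\<^sub>v (unit_vec n k - cw) \<in> carrier_vec n" using c cw by simp
      ultimately show "\<exists>c\<in>carrier_vec n. P' *\<^sub>v x = A *\<^sub>v c" by blast
    qed
    show ?thesis using P' P'sym P'P' P'c P'r by blast
  qed
qed


lemma proj_exists:
  fixes A :: "real mat"
  assumes A: "A \<in> carrier_mat n n"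
  shows "\<exists>P\<in>carrier_mat n n. transpose_mat P = P \<and> P * P = P \<and> P * A = A
          \<and> (\<forall>x\<in>carrier_vec n. \<exists>c\<in>carrier_vec n. P *\<^sub>v x = A *\<^sub>v c)"
proof -
  obtain P where P: "P \<in> carrier_mat n n" "transpose_mat P = P" "P * P = P"
    and Pc: "\<forall>j<n. P *\<^sub>v col A j = col A j"
    and Pr: "\<forall>x\<in>carrier_vec n. \<exists>c\<in>carrier_vec n. P *\<^sub>v x = A *\<^sub>v c"
    using proj_exists_aux[OF A, of n] by auto
  have "P * A = A"
  proof (rule eq_matI)
    fix i j assume "i < dim_row A" "j < dim_col A"
    hence ij: "i < n" "j < n" using A by auto
    have "(P *\<^sub>v col A j) $ i = col A j $ i" using Pc ij by simp
    thus "(P * A) $$ (i, j) = A $$ (i, j)" using ij A P by simp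
  qed (use A P in auto)
  thus ?thesis using P Pr by blast
qed

lemma assoc_nn: "A \<in> carrier_mat n n \<Longrightarrow> B \<in> carrier_mat n n \<Longrightarrow> C \<in> carrier_mat n n \<Longrightarrow>
  A * B * (C::'a::comm_ring_1 mat) = A * (B * C)"
  by (rule assoc_mult_mat)

lemma mult_nn: "A \<in> carrier_mat n n \<Longrightarrow> B \<in> carrier_mat n n \<Longrightarrow> A * (B::'a::comm_ring_1 mat) \<in> carrier_mat n n"
  by simp

definition penrose :: "nat \<Rightarrow> real mat \<Rightarrow> real mat \<Rightarrow> bool" where
  "penrose n A B \<longleftrightarrow> B \<in> carrier_mat n n \<and> A * B * A = A \<and> B * A * B = B
      \<and> transpose_mat (A * B) = A * B \<and> transpose_mat (B * A) = B * A"

lemma penrose_unique: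
  assumes A: "A \<in> carrier_mat n n" and p1: "penrose n A B1" and p2: "penrose n A B2"
  shows "B1 = B2"
proof -
  have B1: "B1 \<in> carrier_mat n n" and B2: "B2 \<in> carrier_mat n n" using p1 p2 by (auto simp: penrose_def)
  have a1: "A * (B1 * A) = A" and b1: "B1 * (A * B1) = B1"
    and t1: "transpose_mat (A * B1) = A * B1" and s1: "transpose_mat (B1 * A) = B1 * A"
    using p1 A B1 by (auto simp: penrose_def)
  have a2: "A * (B2 * A) = A" and b2: "B2 * (A * B2) = B2"
    and t2: "transpose_mat (A * B2) = A * B2" and s2: "transpose_mat (B2 * A) = B2 * A"
    using p2 A B2 by (auto simp: penrose_def)
  have c: "B1 * A \<in> carrier_mat n n" "B2 * A \<in> carrier_mat n n" "A * B1 \<in> carrier_mat n n" "A * B2 \<in> carrier_mat n n"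
    "A * (B1 * A) \<in> carrier_mat n n" "A * (B2 * A) \<in> carrier_mat n n"
    "B1 * (A * B1) \<in> carrier_mat n n" "B2 * (A * B2) \<in> carrier_mat n n"
    "A * (B2 * (A * B1)) \<in> carrier_mat n n" "B2 * (A * B1) \<in> carrier_mat n n" "A * (B2 * A) \<in> carrier_mat n n"
    using A B1 B2 by auto
  have e1: "(B1 * A) * (B2 * A) = B2 * A"
  proof -
    have "(B1 * A) * (B2 * A) = transpose_mat (B1 * A) * transpose_mat (B2 * A)" using s1 s2 by simp
    also have "\<dots> = transpose_mat ((B2 * A) * (B1 * A))"
      using transpose_mult[of "B2 * A" n n "B1 * A" n] A B1 B2 by simp
    also have "(B2 * A) * (B1 * A) = B2 * (A * (B1 * A))" using A B1 B2 c by (simp add: assoc_nn[of _ n] mult_nn)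
    also have "\<dots> = B2 * A" using a1 by simp
    finally show ?thesis using s2 by simp
  qed
  have e2: "(A * B2) * (A * B1) = A * B2"
  proof -
    have "(A * B2) * (A * B1) = transpose_mat (A * B2) * transpose_mat (A * B1)" using t1 t2 by simp
    also have "\<dots> = transpose_mat ((A * B1) * (A * B2))"
      using transpose_mult[of "A * B1" n n "A * B2" n] A B1 B2 by simp
    also have "(A * B1) * (A * B2) = (A * (B1 * A)) * B2" using A B1 B2 c by (simp add: assoc_nn[of _ n] mult_nn)
    also have "\<dots> = A * B2" using a1 by simp
    finally show ?thesis using t2 by simp
  qed
  have "B1 = B1 * (A * B1)" using b1 by simp
  also have "\<dots> = B1 * ((A * (B2 * A)) * B1)" using a2 by simp
  also have "\<dots> = ((B1 * A) * (B2 * A)) * B1" using A B1 B2 c by (simp add: assoc_nn[of _ n] mult_nn)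
  also have "\<dots> = B2 * (A * B1)" using e1 A B1 B2 c by (simp add: assoc_nn[of _ n] mult_nn)
  also have "\<dots> = (B2 * (A * B2)) * (A * B1)" using b2 by simp
  also have "\<dots> = B2 * ((A * B2) * (A * B1))" using A B1 B2 c by (simp add: assoc_nn[of _ n] mult_nn)
  also have "\<dots> = B2 * (A * B2)" using e2 by simp
  also have "\<dots> = B2" using b2 by simp
  finally show ?thesis .
qed

lemma penrose_exists_sym:
  fixes A :: "real mat"
  assumes A: "A \<in> carrier_mat n n" and As: "transpose_mat A = A"
  shows "\<exists>B. penrose n A B"
proof -
  obtain P where P: "P \<in> carrier_mat n n" and Ps: "transpose_mat P = P" and PP: "P * P = P"
    and PA: "P * A = A" and Pr: "\<forall>x\<in>carrier_vec n. \<exists>c\<in>carrier_vec n. P *\<^sub>v x = A *\<^sub>v c"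
    using proj_exists[OF A] by auto
  have AP: "A * P = A"
  proof -
    have "transpose_mat (P * A) = transpose_mat A * transpose_mat P" using transpose_mult[OF P A] .
    thus ?thesis using PA As Ps by simp
  qed
  define C where "C = (A + 1\<^sub>m n) - P"
  have C: "C \<in> carrier_mat n n" using A P by (simp add: C_def minus_carrier_mat)
  have CP: "C * P = A"
  proof -
    have "C * P = (A + 1\<^sub>m n) * P - P * P" unfolding C_def using A P by (simp add: minus_mult_distrib_mat[of "A + 1\<^sub>m n" n n P P n])
    also have "\<dots> = (A + P) - P" using A P PP AP by (simp add: add_mult_distrib_mat[of _ n n])
    also have "\<dots> = A" by (rule eq_matI) (use A P in auto)
    finally show ?thesis .
  qed
  have PC: "P * C = A"
  proof -
    have "P * C = P * (A + 1\<^sub>m n) - P * P" unfolding C_def using A P by (simp add: mult_minus_distrib_mat[of P n n "A + 1\<^sub>m n" n P])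
    also have "\<dots> = (A + P) - P" using A P PP PA by (simp add: mult_add_distrib_mat[of _ n n])
    also have "\<dots> = A" by (rule eq_matI) (use A P in auto)
    finally show ?thesis .
  qed
  have detC: "det C \<noteq> 0"
  proof
    assume "det C = 0"
    then obtain v where v: "v \<in> carrier_vec n" and vnz: "v \<noteq> 0\<^sub>v n" and Cv: "C *\<^sub>v v = 0\<^sub>v n"
      using det_0_iff_vec_prod_zero[OF C] by auto
    have Cv': "C *\<^sub>v v = A *\<^sub>v v + v - P *\<^sub>v v"
      unfolding C_def using A P v
      by (simp add: minus_mult_distrib_mat_vec[of "A + 1\<^sub>m n" n n P v] add_mult_distrib_mat_vec[of A n n "1\<^sub>m n" v])
    define u where "u = A *\<^sub>v v"
    have u: "u \<in> carrier_vec n" using A v by (simp add: u_def)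
    have ue: "u = P *\<^sub>v v - v"
    proof (rule eq_vecI)
      fix i assume "i < dim_vec (P *\<^sub>v v - v)"
      hence i: "i < n" using v by simp
      have "(C *\<^sub>v v) $ i = 0" using Cv i by simp
      thus "u $ i = (P *\<^sub>v v - v) $ i" using i Cv' A P v by (simp add: u_def)
    qed (use u v P in auto)
    have "u \<bullet> u = u \<bullet> (P *\<^sub>v v) - u \<bullet> v"
      using scalar_prod_minus_distrib[OF u, of "P *\<^sub>v v" v] ue u v P by simp
    also have "u \<bullet> (P *\<^sub>v v) = v \<bullet> (A *\<^sub>v (P *\<^sub>v v))"
      unfolding u_def using sym_scalar[OF A As v, of "P *\<^sub>v v"] P v by simp
    also have "A *\<^sub>v (P *\<^sub>v v) = A *\<^sub>v v" using assoc_mult_mat_vec[OF A P v] AP by simp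
    also have "u \<bullet> v = v \<bullet> (A *\<^sub>v v)" unfolding u_def using comm_scalar_prod[of "A *\<^sub>v v" n v] A v by simp
    finally have "u \<bullet> u = 0" by simp
    hence u0: "u = 0\<^sub>v n" using self_scalar_zero[OF u] by simp
    have Pv: "P *\<^sub>v v = v"
    proof (rule eq_vecI)
      fix i assume "i < dim_vec v"
      hence i: "i < n" using v by simp
      have "u $ i = 0" using u0 i by simp
      thus "(P *\<^sub>v v) $ i = v $ i" using ue i P v by simp
    qed (use P v in auto)
    obtain c where c: "c \<in> carrier_vec n" and vc: "P *\<^sub>v v = A *\<^sub>v c" using Pr v by auto
    have vAc: "v = A *\<^sub>v c" using Pv vc by simp
    have "(A *\<^sub>v c) \<bullet> (A *\<^sub>v c) = c \<bullet> (A *\<^sub>v (A *\<^sub>v c))" using sym_scalar[OF A As c, of "A *\<^sub>v c"] A c by simp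
    also have "A *\<^sub>v (A *\<^sub>v c) = 0\<^sub>v n" using u0 vAc by (simp add: u_def)
    finally have "(A *\<^sub>v c) \<bullet> (A *\<^sub>v c) = 0" using c by simp
    hence "A *\<^sub>v c = 0\<^sub>v n" using self_scalar_zero[of "A *\<^sub>v c" n] A c by simp
    thus False using vAc vnz by simp
  qed
  have "C \<in> Units (ring_mat TYPE(real) n undefined)" using det_non_zero_imp_unit[OF C detC] .
  then obtain Ci where Ci: "Ci \<in> carrier_mat n n" and CiC: "Ci * C = 1\<^sub>m n" and CCi: "C * Ci = 1\<^sub>m n"
    unfolding Units_def ring_mat_def by auto
  have PCi: "P * Ci = Ci * P"
  proof -
    have "P * Ci = (Ci * C) * (P * Ci)" using CiC P Ci by simp
    also have "\<dots> = Ci * (C * P) * Ci" using Ci C P by (simp add: assoc_nn[of _ n] mult_nn)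
    also have "C * P = P * C" using CP PC by simp
    also have "Ci * (P * C) * Ci = (Ci * P) * (C * Ci)" using Ci C P by (simp add: assoc_nn[of _ n] mult_nn)
    also have "\<dots> = Ci * P" using CCi Ci P by simp
    finally show ?thesis .
  qed
  define B where "B = Ci * P"
  have B: "B \<in> carrier_mat n n" using Ci P by (simp add: B_def)
  have AB: "A * B = P"
  proof -
    have "A * B = (P * C) * (Ci * P)" using PC by (simp add: B_def)
    also have "\<dots> = P * (C * Ci) * P" using P C Ci by (simp add: assoc_nn[of _ n] mult_nn)
    also have "\<dots> = P" using CCi PP P by simp
    finally show ?thesis .
  qed
  have BA: "B * A = P"
  proof -
    have "B * A = (Ci * P) * (C * P)" using CP by (simp add: B_def)
    also have "\<dots> = Ci * (P * C) * P" using P C Ci by (simp add: assoc_nn[of _ n] mult_nn)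
    also have "\<dots> = Ci * (C * P) * P" using PC CP by simp
    also have "\<dots> = (Ci * C) * (P * P)" using P C Ci by (simp add: assoc_nn[of _ n] mult_nn)
    also have "\<dots> = P" using CiC PP P by simp
    finally show ?thesis .
  qed
  have "A * B * A = A" using AB PA by simp
  moreover have "B * A * B = B"
  proof -
    have "B * A * B = P * (Ci * P)" using BA by (simp add: B_def)
    also have "\<dots> = Ci * (P * P)" using PCi P Ci by (simp add: assoc_mult_mat[symmetric, of P n n Ci n P n])
    finally show ?thesis using PP by (simp add: B_def)
  qed
  ultimately have "penrose n A B" using B AB BA Ps by (simp add: penrose_def)
  thus ?thesis by blast
qed

lemma mp_pinv_penrose:
  fixes A :: "real mat"
  assumes A: "A \<in> carrier_mat n n" and As: "transpose_mat A = A"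
  shows "penrose n A (mp_pinv n A)"
proof -
  obtain B where B: "penrose n A B" using penrose_exists_sym[OF A As] by auto
  have "\<exists>!B. penrose n A B" using B penrose_unique[OF A] by blast
  hence "penrose n A (THE B. penrose n A B)" by (rule theI')
  thus ?thesis unfolding mp_pinv_def penrose_def[symmetric] .
qed




definition gvec :: "('x \<Rightarrow> 'h::real_vector) \<Rightarrow> (nat \<Rightarrow> 'x) \<Rightarrow> nat \<Rightarrow> real vec \<Rightarrow> 'h" where
  "gvec Kx X N b = (\<Sum>j<N. (b $ j) *\<^sub>R Kx (X (j+1)))"

lemma gram_carrier_Suc[simp]: "gram Kx X n \<in> carrier_mat (Suc n) (Suc n)"
  by (simp add: gram_def)

lemma gram_carrier[simp]: "gram Kx X n \<in> carrier_mat (n+1) (n+1)"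
  by (simp add: gram_def)

lemma gram_dims[simp]: "dim_row (gram Kx X n) = n+1" "dim_col (gram Kx X n) = n+1"
  by (simp_all add: gram_def)

lemma gram_mult_carrier[simp]: "gram Kx X n *\<^sub>v b \<in> carrier_vec (Suc n)"
  unfolding carrier_vec_def by simp

lemma gram_index: "i < n+1 \<Longrightarrow> j < n+1 \<Longrightarrow>
   gram Kx X n $$ (i,j) = inner (Kx (X (i+1))) (Kx (X (j+1)))"
  by (simp add: gram_def kern_def)

lemma gram_sym: "transpose_mat (gram Kx X n) = gram Kx X n"
  by (rule eq_matI) (auto simp: gram_def kern_def inner_commute)

lemma gram_mult:
  assumes b: "b \<in> carrier_vec (n+1)" and i: "i < n+1"
  shows "(gram Kx X n *\<^sub>v b) $ i = inner (Kx (X (i+1))) (gvec Kx X (n+1) b)"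
proof -
  have "(gram Kx X n *\<^sub>v b) $ i = (\<Sum>j<n+1. gram Kx X n $$ (i,j) * b $ j)"
    using b i by (simp add: scalar_prod_def atLeast0LessThan)
  also have "\<dots> = (\<Sum>j<n+1. inner (Kx (X (i+1))) ((b $ j) *\<^sub>R Kx (X (j+1))))"
    by (rule sum.cong) (use i in \<open>auto simp: gram_index mult.commute\<close>)
  also have "\<dots> = inner (Kx (X (i+1))) (gvec Kx X (n+1) b)"
    by (simp only: gvec_def inner_sum_right inner_scaleR_right)
  finally show ?thesis .
qed

lemma gram_col:
  assumes b: "b \<in> carrier_vec (n+1)" and i: "i < n+1"
  shows "b \<bullet> col (gram Kx X n) i = inner (gvec Kx X (n+1) b) (Kx (X (i+1)))"
proof -
  have "b \<bullet> col (gram Kx X n) i = (\<Sum>j<n+1. b $ j * gram Kx X n $$ (j,i))"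
    using b i by (simp add: scalar_prod_def atLeast0LessThan)
  also have "\<dots> = (\<Sum>j<n+1. inner ((b $ j) *\<^sub>R Kx (X (j+1))) (Kx (X (i+1))))"
    by (rule sum.cong) (use i in \<open>auto simp: gram_index\<close>)
  also have "\<dots> = inner (gvec Kx X (n+1) b) (Kx (X (i+1)))"
    by (simp only: gvec_def inner_sum_left inner_scaleR_left)
  finally show ?thesis .
qed

lemma gram_quad:
  assumes b: "b \<in> carrier_vec (n+1)"
  shows "b \<bullet> (gram Kx X n *\<^sub>v b) = (norm (gvec Kx X (n+1) b))\<^sup>2"
proof -
  have "b \<bullet> (gram Kx X n *\<^sub>v b) = (\<Sum>i<n+1. b $ i * (gram Kx X n *\<^sub>v b) $ i)"
    by (simp add: scalar_prod_def atLeast0LessThan)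
  also have "\<dots> = (\<Sum>i<n+1. inner ((b $ i) *\<^sub>R Kx (X (i+1))) (gvec Kx X (n+1) b))"
    by (rule sum.cong) (use b in \<open>auto simp del: index_mult_mat_vec simp: gram_mult\<close>)
  also have "\<dots> = inner (gvec Kx X (n+1) b) (gvec Kx X (n+1) b)"
    by (simp only: gvec_def[of Kx X "n+1" b] inner_sum_left inner_scaleR_left)
  finally show ?thesis by (simp add: power2_norm_eq_inner)
qed

lemma Rhat_gvec:
  assumes b: "b \<in> carrier_vec (n+1)"
  shows "Rhat l lam n X Y Kx y z v b = Rbold l lam n X Y Kx y z v (gvec Kx X (n+1) b)"
proof -
  have s: "(\<Sum>i=1..n. v i * l (Y i) (b \<bullet> col (gram Kx X n) (i-1)))
         = (\<Sum>i=1..n. v i * l (Y i) (evalH (gvec Kx X (n+1) b) Kx (X i)))"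
    by (rule sum.cong) (use b in \<open>auto simp: gram_col evalH_def\<close>)
  show ?thesis unfolding Rhat_def Rbold_def Let_def s
    using b by (simp add: gram_col evalH_def gram_quad)
qed

lemma gvec_add: "b \<in> carrier_vec N \<Longrightarrow> c \<in> carrier_vec N \<Longrightarrow> gvec Kx X N (b + c) = gvec Kx X N b + gvec Kx X N c"
  by (simp add: gvec_def scaleR_add_left sum.distrib)

lemma gvec_minus: "b \<in> carrier_vec N \<Longrightarrow> c \<in> carrier_vec N \<Longrightarrow> gvec Kx X N (b - c) = gvec Kx X N b - gvec Kx X N c"
  by (simp add: gvec_def scaleR_diff_left sum_subtractf)

lemma gvec_smult: "b \<in> carrier_vec N \<Longrightarrow> gvec Kx X N (t \<cdot>\<^sub>v b) = t *\<^sub>R gvec Kx X N b"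
  by (simp add: gvec_def scaleR_sum_right)

lemma gvec_unit: "j < N \<Longrightarrow> gvec Kx X N (unit_vec N j) = Kx (X (j+1))"
proof -
  assume j: "j < N"
  have "gvec Kx X N (unit_vec N j) = (\<Sum>i<N. (if i = j then Kx (X (j+1)) else 0))"
    unfolding gvec_def by (rule sum.cong) (auto simp: unit_vec_def)
  also have "\<dots> = Kx (X (j+1))" using j by (simp add: sum.delta)
  finally show ?thesis .
qed

lemma gvec_span: "gvec Kx X (n+1) b \<in> span (Kx ` X ` {1..n+1})"
  unfolding gvec_def
  by (intro span_sum span_scale span_base) auto

lemma orth_span_zero:
  fixes h :: "'h::real_inner"
  assumes "h \<in> span S" and "\<And>s. s \<in> S \<Longrightarrow> inner s h = 0"
  shows "h = 0"
proof -
  have "real_inner_class.orthogonal h h"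
    by (rule orthogonal_to_span[OF assms(1)]) (use assms(2) in \<open>auto simp: real_inner_class.orthogonal_def inner_commute\<close>)
  thus ?thesis by (simp add: real_inner_class.orthogonal_def)
qed

lemma gram_mult_zero_gvec:
  assumes b: "b \<in> carrier_vec (n+1)" and K0: "gram Kx X n *\<^sub>v b = 0\<^sub>v (n+1)"
  shows "gvec Kx X (n+1) b = 0"
proof -
  have "(norm (gvec Kx X (n+1) b))\<^sup>2 = 0" using gram_quad[OF b, of Kx X] K0 b by simp
  thus ?thesis by simp
qed

lemma gvec_zero_gram:
  assumes b: "b \<in> carrier_vec (n+1)" and g0: "gvec Kx X (n+1) b = 0"
  shows "gram Kx X n *\<^sub>v b = 0\<^sub>v (n+1)"
  by (rule eq_vecI) (use b g0 in \<open>auto simp del: index_mult_mat_vec simp: gram_mult\<close>)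




lemma strong_convex_min:
  fixes F :: "'h::{real_inner,complete_space} \<Rightarrow> real"
  assumes lam: "lam > 0" and cont: "continuous_on UNIV F"
    and mid: "\<And>f g. F ((1/2) *\<^sub>R (f + g)) \<le> (F f + F g)/2 - lam/4 * (norm (f - g))\<^sup>2"
    and bdd: "bdd_below (range F)"
  shows "\<exists>!f. \<forall>g. F f \<le> F g"
proof -
  define m where "m = Inf (range F)"
  have low: "m \<le> F g" for g unfolding m_def by (rule cInf_lower[OF rangeI bdd])
  have "\<forall>k::nat. \<exists>f. F f < m + inverse (real (Suc k))"
  proof
    fix k :: nat
    have "Inf (range F) < m + inverse (real (Suc k))" unfolding m_def by simp
    then obtain x where "x \<in> range F" "x < m + inverse (real (Suc k))" using cInf_lessD[of "range F"] by blast
    thus "\<exists>f. F f < m + inverse (real (Suc k))" by auto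
  qed
  then obtain fs where fs: "\<And>k. F (fs k) < m + inverse (real (Suc k))" by metis
  have key: "lam/4 * (norm (fs j - fs k))\<^sup>2 \<le> (inverse (real (Suc j)) + inverse (real (Suc k)))/2" for j k
  proof -
    have "m \<le> F ((1/2) *\<^sub>R (fs j + fs k))" by (rule low)
    also have "\<dots> \<le> (F (fs j) + F (fs k))/2 - lam/4 * (norm (fs j - fs k))\<^sup>2" by (rule mid)
    finally show ?thesis using fs[of j] fs[of k] unfolding add_divide_distrib by linarith
  qed
  have "Cauchy fs"
  proof (rule metric_CauchyI)
    fix e :: real assume e: "e > 0"
    obtain M where M: "inverse (real (Suc M)) < lam * e\<^sup>2 / 4"
      using reals_Archimedean[of "lam * e\<^sup>2 / 4"] lam e by auto
    show "\<exists>M. \<forall>j\<ge>M. \<forall>k\<ge>M. dist (fs j) (fs k) < e"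
    proof (intro exI allI impI)
      fix j k assume j: "j \<ge> M" and k: "k \<ge> M"
      have "inverse (real (Suc j)) \<le> inverse (real (Suc M))" using j by (simp add: field_simps)
      moreover have "inverse (real (Suc k)) \<le> inverse (real (Suc M))" using k by (simp add: field_simps)
      ultimately have "lam/4 * (norm (fs j - fs k))\<^sup>2 < lam * e\<^sup>2 / 4" using key[of j k] M unfolding add_divide_distrib by linarith
      hence "(norm (fs j - fs k))\<^sup>2 < e\<^sup>2" using lam by simp
      hence "norm (fs j - fs k) < e" using e by (smt (verit) power_mono norm_ge_zero)
      thus "dist (fs j) (fs k) < e" by (simp add: dist_norm)
    qed
  qed
  hence conv: "fs \<longlonglongrightarrow> lim fs" using Cauchy_convergent_iff convergent_LIMSEQ_iff by blast
  have ic: "isCont F x" for x using cont continuous_on_eq_continuous_at[of UNIV F] by simp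
  have t1: "(\<lambda>k. F (fs k)) \<longlonglongrightarrow> F (lim fs)" by (rule isCont_tendsto_compose[OF ic conv])
  have t2: "(\<lambda>k. F (fs k)) \<longlonglongrightarrow> m"
  proof (rule tendsto_sandwich[of "\<lambda>_. m" _ _ "\<lambda>k. m + inverse (real (Suc k))"])
    show "\<forall>\<^sub>F k in sequentially. m \<le> F (fs k)" using low by simp
    show "\<forall>\<^sub>F k in sequentially. F (fs k) \<le> m + inverse (real (Suc k))" using fs by (simp add: less_imp_le)
    show "(\<lambda>k. m) \<longlonglongrightarrow> m" by simp
    show "(\<lambda>k. m + inverse (real (Suc k))) \<longlonglongrightarrow> m"
      using tendsto_add[OF tendsto_const LIMSEQ_inverse_real_of_nat, of m] by simp
  qed
  have "F (lim fs) = m" using LIMSEQ_unique[OF t1 t2] .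
  hence ex: "\<forall>g. F (lim fs) \<le> F g" using low by simp
  show ?thesis
  proof (rule ex1I[of _ "lim fs"])
    show "\<forall>g. F (lim fs) \<le> F g" by (rule ex)
    fix f assume f: "\<forall>g. F f \<le> F g"
    have eq: "F f = F (lim fs)" using f ex by (meson order_antisym)
    have "F f \<le> F ((1/2) *\<^sub>R (f + lim fs))" using f by simp
    also have "\<dots> \<le> (F f + F (lim fs))/2 - lam/4 * (norm (f - lim fs))\<^sup>2" by (rule mid)
    finally have "lam/4 * (norm (f - lim fs))\<^sup>2 \<le> 0" using eq by simp
    hence "(norm (f - lim fs))\<^sup>2 \<le> 0" using lam by (simp add: mult_le_0_iff)
    thus "f = lim fs" by simp
  qed
qed


lemma convex_mid_real:
  fixes g :: "real \<Rightarrow> real"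
  assumes C: "convex_on UNIV g"
  shows "g ((a + b)/2) \<le> (g a + g b)/2"
proof -
  have "g ((1 - 1/2) *\<^sub>R a + (1/2) *\<^sub>R b) \<le> (1 - 1/2) * g a + (1/2) * g b"
    by (rule convex_onD[OF C]) auto
  thus ?thesis by (simp add: add_divide_distrib)
qed

lemma evalH_mid: "evalH ((1/2) *\<^sub>R (f + g)) Kx x = (evalH f Kx x + evalH g Kx x)/2"
  by (simp add: evalH_def inner_add_left)

lemma norm_mid: "(norm ((1/2) *\<^sub>R (f + g)))\<^sup>2 = ((norm f)\<^sup>2 + (norm (g::'h::real_inner))\<^sup>2)/2 - (norm (f - g))\<^sup>2/4"
  by (simp add: power2_norm_eq_inner inner_add_left inner_add_right inner_diff_left inner_diff_right
      inner_commute field_simps)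

lemma Rbold_mid:
  assumes C: "\<forall>w\<in>Ycal. convex_on UNIV (l w)" and Yin: "\<forall>i\<in>{1..n}. Y i \<in> Ycal"
    and y: "y \<in> Ycal" and z: "z \<in> Ycal" and vn: "\<forall>i. v i \<ge> 0"
  shows "Rbold l lam n X Y Kx y z v ((1/2) *\<^sub>R (f + g))
     \<le> (Rbold l lam n X Y Kx y z v f + Rbold l lam n X Y Kx y z v g)/2 - lam/4 * (norm (f - g))\<^sup>2"
proof -
  let ?m = "(1/2) *\<^sub>R (f + g)"
  have cm: "l w (evalH ?m Kx x) \<le> (l w (evalH f Kx x) + l w (evalH g Kx x))/2" if "w \<in> Ycal" for w x
    unfolding evalH_mid using convex_mid_real[of "l w"] C that by blast
  have S: "(\<Sum>i=1..n. v i * l (Y i) (evalH ?m Kx (X i)))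
      \<le> ((\<Sum>i=1..n. v i * l (Y i) (evalH f Kx (X i))) + (\<Sum>i=1..n. v i * l (Y i) (evalH g Kx (X i))))/2"
  proof -
    have "(\<Sum>i=1..n. v i * l (Y i) (evalH ?m Kx (X i)))
       \<le> (\<Sum>i=1..n. (v i * l (Y i) (evalH f Kx (X i)) + v i * l (Y i) (evalH g Kx (X i)))/2)"
    proof (rule sum_mono)
      fix i assume i: "i \<in> {1..n}"
      have "v i * l (Y i) (evalH ?m Kx (X i)) \<le> v i * ((l (Y i) (evalH f Kx (X i)) + l (Y i) (evalH g Kx (X i)))/2)"
        by (rule mult_left_mono[OF cm]) (use Yin i vn in auto)
      thus "v i * l (Y i) (evalH ?m Kx (X i)) \<le> (v i * l (Y i) (evalH f Kx (X i)) + v i * l (Y i) (evalH g Kx (X i)))/2"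
        by (simp add: field_simps)
    qed
    also have "\<dots> = ((\<Sum>i=1..n. v i * l (Y i) (evalH f Kx (X i))) + (\<Sum>i=1..n. v i * l (Y i) (evalH g Kx (X i))))/2"
      by (simp add: sum.distrib sum_divide_distrib[symmetric])
    finally show ?thesis .
  qed
  define N where "N = real (n+1)"
  have N: "N > 0" by (simp add: N_def)
  have S': "(1/N) * (\<Sum>i=1..n. v i * l (Y i) (evalH ?m Kx (X i)))
      \<le> ((1/N) * (\<Sum>i=1..n. v i * l (Y i) (evalH f Kx (X i))) + (1/N) * (\<Sum>i=1..n. v i * l (Y i) (evalH g Kx (X i))))/2"
    using mult_left_mono[OF S, of "1/N"] N by (simp add: field_simps)
  have T1: "v (n+1)/N * l z (evalH ?m Kx (X (n+1))) \<le> (v (n+1)/N * l z (evalH f Kx (X (n+1))) + v (n+1)/N * l z (evalH g Kx (X (n+1))))/2"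
    using mult_left_mono[OF cm[OF z], of "v (n+1)/N" "X (n+1)"] N vn by (simp add: field_simps)
  have T2: "v (n+2)/N * l y (evalH ?m Kx (X (n+1))) \<le> (v (n+2)/N * l y (evalH f Kx (X (n+1))) + v (n+2)/N * l y (evalH g Kx (X (n+1))))/2"
    using mult_left_mono[OF cm[OF y], of "v (n+2)/N" "X (n+1)"] N vn by (simp add: field_simps)
  have Q: "lam * (norm ?m)\<^sup>2 = (lam * (norm f)\<^sup>2 + lam * (norm g)\<^sup>2)/2 - lam/4 * (norm (f - g))\<^sup>2"
    unfolding norm_mid by (simp add: field_simps)
  show ?thesis unfolding Rbold_def N_def[symmetric] Q using S' T1 T2
    unfolding add_divide_distrib by linarith
qed

lemma isCont_of_deriv: "\<forall>u. (g has_real_derivative g' u) (at u) \<Longrightarrow> isCont g u"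
  using DERIV_isCont by blast

lemma cont_term:
  fixes g :: "real \<Rightarrow> real" and c :: real
  assumes "\<And>u. isCont g u"
  shows "continuous_on UNIV (\<lambda>f::'h::real_inner. c * g (evalH f Kx x))"
proof -
  have "isCont (\<lambda>f::'h. c * g (evalH f Kx x)) f" for f
  proof -
    have "isCont (\<lambda>f::'h. evalH f Kx x) f" unfolding evalH_def by (intro continuous_intros)
    hence "isCont (\<lambda>f::'h. g (evalH f Kx x)) f" using isCont_o2 assms by blast
    thus ?thesis by (rule continuous_mult[OF continuous_const])
  qed
  thus ?thesis by (simp add: continuous_at_imp_continuous_on)
qed

lemma Rbold_cont:
  fixes Kx :: "'x \<Rightarrow> 'h::real_inner"
  assumes D1: "\<forall>w\<in>Ycal. \<forall>u. (l w has_real_derivative deriv (l w) u) (at u)"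
    and Yin: "\<forall>i\<in>{1..n}. Y i \<in> Ycal" and y: "y \<in> Ycal" and z: "z \<in> Ycal"
  shows "continuous_on UNIV (Rbold l lam n X Y Kx y z v)"
proof -
  have ic: "isCont (l w) u" if "w \<in> Ycal" for w u using D1 that isCont_of_deriv by blast
  have s: "continuous_on UNIV (\<lambda>f::'h. \<Sum>i=1..n. v i * l (Y i) (evalH f Kx (X i)))"
    by (rule continuous_on_sum) (use Yin ic in \<open>auto intro!: cont_term\<close>)
  have "continuous_on UNIV (\<lambda>f::'h. (1 / real (n+1)) * (\<Sum>i=1..n. v i * l (Y i) (evalH f Kx (X i)))
       + v (n+1) / real (n+1) * l z (evalH f Kx (X (n+1)))
       + v (n+2) / real (n+1) * l y (evalH f Kx (X (n+1)))
       + lam * (norm f)\<^sup>2)"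
    by (intro continuous_intros s cont_term ic y z)
  thus ?thesis unfolding Rbold_def[abs_def] by simp
qed

definition lowlin :: "('h::real_normed_vector \<Rightarrow> real) \<Rightarrow> bool" where
  "lowlin P \<longleftrightarrow> (\<exists>A B. \<forall>f. A - B * norm f \<le> P f)"

lemma lowlin_add: "lowlin P \<Longrightarrow> lowlin Q \<Longrightarrow> lowlin (\<lambda>f. P f + Q f)"
proof -
  assume "lowlin P" "lowlin Q"
  then obtain A1 B1 A2 B2 where "\<forall>f. A1 - B1 * norm f \<le> P f" "\<forall>f. A2 - B2 * norm f \<le> Q f"
    unfolding lowlin_def by blast
  hence "\<forall>f. (A1 + A2) - (B1 + B2) * norm f \<le> P f + Q f"
    by (metis (no_types, lifting) add_mono add_diff_add distrib_right)
  thus ?thesis unfolding lowlin_def by blast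
qed

lemma lowlin_scale: "c \<ge> 0 \<Longrightarrow> lowlin P \<Longrightarrow> lowlin (\<lambda>f. c * P f)"
proof -
  assume c: "c \<ge> 0" and "lowlin P"
  then obtain A B where AB: "\<forall>f. A - B * norm f \<le> P f" unfolding lowlin_def by blast
  have "\<forall>f. c * A - (c * B) * norm f \<le> c * P f"
  proof
    fix f show "c * A - (c * B) * norm f \<le> c * P f"
      using mult_left_mono[OF AB[rule_format, of f] c] by (simp add: algebra_simps)
  qed
  thus ?thesis unfolding lowlin_def by blast
qed

lemma lowlin_const: "lowlin (\<lambda>f. c)"
  unfolding lowlin_def by (rule exI[of _ c], rule exI[of _ 0]) simp

lemma lowlin_sum: "finite I \<Longrightarrow> (\<forall>i\<in>I. lowlin (P i)) \<Longrightarrow> lowlin (\<lambda>f. \<Sum>i\<in>I. P i f)"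
proof (induction I rule: finite_induct)
  case empty show ?case using lowlin_const[of 0] by simp
next
  case (insert x F)
  hence "lowlin (\<lambda>f. P x f + (\<Sum>i\<in>F. P i f))" by (intro lowlin_add) auto
  thus ?case using insert by simp
qed

lemma lowlin_term:
  assumes C: "convex_on UNIV g" and D: "(g has_real_derivative d) (at 0)"
  shows "lowlin (\<lambda>f::'h::real_inner. g (evalH f Kx x))"
proof -
  have "\<forall>f::'h. g 0 - (\<bar>d\<bar> * norm (Kx x)) * norm f \<le> g (evalH f Kx x)"
  proof
    fix f :: 'h
    let ?u = "evalH f Kx x"
    have "g ?u - g 0 \<ge> d * (?u - 0)"
      by (rule convex_on_imp_above_tangent[OF C]) (use D in auto)
    hence tg: "g ?u - g 0 \<ge> d * ?u" by simp
    have CS: "\<bar>?u\<bar> \<le> norm f * norm (Kx x)" unfolding evalH_def by (rule Cauchy_Schwarz_ineq2)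
    have h1: "\<bar>d * ?u\<bar> \<le> \<bar>d\<bar> * norm (Kx x) * norm f"
      using mult_left_mono[OF CS abs_ge_zero[of d]] by (simp add: abs_mult mult_ac)
    have "d * ?u \<ge> - (\<bar>d\<bar> * norm (Kx x) * norm f)"
      using h1 abs_ge_minus_self[of "d * ?u"] by linarith
    thus "g 0 - (\<bar>d\<bar> * norm (Kx x)) * norm f \<le> g ?u" using tg by linarith
  qed
  thus ?thesis unfolding lowlin_def by blast
qed

lemma lowlin_quad_bdd:
  assumes P: "lowlin P" and lam: "lam > 0"
  shows "bdd_below (range (\<lambda>f. P f + lam * (norm f)\<^sup>2))"
proof -
  obtain A B where AB: "\<forall>f. A - B * norm f \<le> P f" using P unfolding lowlin_def by blast
  have "A - B\<^sup>2 / (4 * lam) \<le> P f + lam * (norm f)\<^sup>2" for f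
  proof -
    let ?t = "norm f"
    have "0 \<le> (2 * lam * ?t - B)\<^sup>2 / (4 * lam)" using lam by simp
    also have "(2 * lam * ?t - B)\<^sup>2 / (4 * lam) = lam * ?t\<^sup>2 - B * ?t + B\<^sup>2 / (4 * lam)"
      using lam by (simp add: field_simps power2_eq_square)
    finally show ?thesis using AB[rule_format, of f] by linarith
  qed
  thus ?thesis by (intro bdd_belowI2) 
qed

lemma Rbold_bdd:
  fixes Kx :: "'x \<Rightarrow> 'h::real_inner"
  assumes C: "\<forall>w\<in>Ycal. convex_on UNIV (l w)"
    and D1: "\<forall>w\<in>Ycal. \<forall>u. (l w has_real_derivative deriv (l w) u) (at u)"
    and Yin: "\<forall>i\<in>{1..n}. Y i \<in> Ycal" and y: "y \<in> Ycal" and z: "z \<in> Ycal"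
    and vn: "\<forall>i. v i \<ge> 0" and lam: "lam > 0"
  shows "bdd_below (range (Rbold l lam n X Y Kx y z v))"
proof -
  have lt: "lowlin (\<lambda>f::'h. l w (evalH f Kx x))" if "w \<in> Ycal" for w x
  proof -
    have "(l w has_real_derivative deriv (l w) 0) (at 0)" using D1 that by blast
    thus ?thesis by (rule lowlin_term[OF bspec[OF C that]])
  qed
  have "lowlin (\<lambda>f::'h. (1 / real (n+1)) * (\<Sum>i=1..n. v i * l (Y i) (evalH f Kx (X i)))
       + v (n+1) / real (n+1) * l z (evalH f Kx (X (n+1)))
       + v (n+2) / real (n+1) * l y (evalH f Kx (X (n+1))))"
    by (intro lowlin_add lowlin_scale lowlin_sum ballI lt) (use vn Yin y z in auto)
  from lowlin_quad_bdd[OF this lam] show ?thesis unfolding Rbold_def[abs_def] by simp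
qed




lemma convex_d2_nonneg:
  fixes g :: "real \<Rightarrow> real"
  assumes C: "convex_on UNIV g"
    and D1: "\<forall>u. (g has_real_derivative deriv g u) (at u)"
    and D2: "\<forall>u. (deriv g has_real_derivative deriv (deriv g) u) (at u)"
  shows "deriv (deriv g) x \<ge> 0"
proof (rule ccontr)
  have mono: "deriv g a \<le> deriv g b" if ab: "a < b" for a b
  proof -
    have t1: "g b - g a \<ge> deriv g a * (b - a)"
      by (rule convex_on_imp_above_tangent[OF C]) (use D1 in auto)
    have t2: "g a - g b \<ge> deriv g b * (a - b)"
      by (rule convex_on_imp_above_tangent[OF C]) (use D1 in auto)
    have "deriv g a * (b - a) \<le> deriv g b * (b - a)" using t1 t2 by (simp add: algebra_simps)
    thus ?thesis using ab by simp
  qed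
  assume "\<not> deriv (deriv g) x \<ge> 0"
  hence neg: "- deriv (deriv g) x > 0" by simp
  have "DERIV (\<lambda>t. - deriv g t) x :> - deriv (deriv g) x" using D2 by (auto intro: DERIV_minus)
  from DERIV_pos_inc_right[OF this neg] obtain d where d: "d > 0"
    and h: "\<forall>h>0. h < d \<longrightarrow> - deriv g x < - deriv g (x + h)" by auto
  have "- deriv g x < - deriv g (x + d/2)" using h d by simp
  moreover have "deriv g x \<le> deriv g (x + d/2)" using mono d by simp
  ultimately show False by simp
qed

lemma deriv_comp_lin0:
  assumes "\<forall>u. (g has_real_derivative g' u) (at u)"
  shows "((\<lambda>t. g (a + t * b)) has_real_derivative g' a * b) (at 0)"
proof -
  have "((\<lambda>t. a + t * b) has_real_derivative b) (at 0)" by (auto intro!: derivative_eq_intros)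
  from DERIV_chain2[OF assms[rule_format, of "a + 0 * b"] this] show ?thesis by simp
qed

lemma evalH_add_scale: "evalH (f + t *\<^sub>R u) Kx x = evalH f Kx x + t * evalH u Kx x"
  by (simp add: evalH_def inner_add_left)

definition D1R where
  "D1R l lam n X Y Kx y z v f u =
     (1 / real (n+1)) * (\<Sum>i=1..n. v i * (deriv (l (Y i)) (evalH f Kx (X i)) * evalH u Kx (X i)))
     + v (n+1) / real (n+1) * (deriv (l z) (evalH f Kx (X (n+1))) * evalH u Kx (X (n+1)))
     + v (n+2) / real (n+1) * (deriv (l y) (evalH f Kx (X (n+1))) * evalH u Kx (X (n+1)))
     + lam * (2 * inner f u)"

definition D2R where
  "D2R l lam n X Y Kx y z v f u w =
     (1 / real (n+1)) * (\<Sum>i=1..n. v i * (deriv (deriv (l (Y i))) (evalH f Kx (X i)) * evalH w Kx (X i) * evalH u Kx (X i)))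
     + v (n+1) / real (n+1) * (deriv (deriv (l z)) (evalH f Kx (X (n+1))) * evalH w Kx (X (n+1)) * evalH u Kx (X (n+1)))
     + v (n+2) / real (n+1) * (deriv (deriv (l y)) (evalH f Kx (X (n+1))) * evalH w Kx (X (n+1)) * evalH u Kx (X (n+1)))
     + lam * (2 * inner w u)"

lemma Rbold_line:
  "Rbold l lam n X Y Kx y z v (f + t *\<^sub>R u) =
     (1 / real (n+1)) * (\<Sum>i=1..n. v i * l (Y i) (evalH f Kx (X i) + t * evalH u Kx (X i)))
     + v (n+1) / real (n+1) * l z (evalH f Kx (X (n+1)) + t * evalH u Kx (X (n+1)))
     + v (n+2) / real (n+1) * l y (evalH f Kx (X (n+1)) + t * evalH u Kx (X (n+1)))
     + lam * ((norm f)\<^sup>2 + t * (2 * inner f u) + t\<^sup>2 * (norm u)\<^sup>2)"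
proof -
  have "(norm (f + t *\<^sub>R u))\<^sup>2 = (norm f)\<^sup>2 + t * (2 * inner f u) + t\<^sup>2 * (norm u)\<^sup>2"
    unfolding power2_norm_eq_inner
    by (simp add: inner_add_left inner_add_right inner_commute[of u f] algebra_simps power2_eq_square)
  thus ?thesis unfolding Rbold_def evalH_add_scale by simp
qed

lemma Rbold_D1:
  assumes D1: "\<forall>w\<in>Ycal. \<forall>u. (l w has_real_derivative deriv (l w) u) (at u)"
    and Yin: "\<forall>i\<in>{1..n}. Y i \<in> Ycal" and y: "y \<in> Ycal" and z: "z \<in> Ycal"
  shows "((\<lambda>t. Rbold l lam n X Y Kx y z v (f + t *\<^sub>R u)) has_real_derivative D1R l lam n X Y Kx y z v f u) (at 0)"
proof -
  have dl: "((\<lambda>t. l w (c + t * d)) has_real_derivative deriv (l w) c * d) (at 0)" if "w \<in> Ycal" for w c d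
    using deriv_comp_lin0[of "l w" "deriv (l w)" c d] D1 that by blast
  have s: "((\<lambda>t. \<Sum>i=1..n. v i * l (Y i) (evalH f Kx (X i) + t * evalH u Kx (X i))) has_real_derivative
          (\<Sum>i=1..n. v i * (deriv (l (Y i)) (evalH f Kx (X i)) * evalH u Kx (X i)))) (at 0)"
    by (rule DERIV_sum, rule DERIV_cmult, rule dl) (use Yin in auto)
  have q: "((\<lambda>t. lam * ((norm f)\<^sup>2 + t * (2 * inner f u) + t\<^sup>2 * (norm u)\<^sup>2)) has_real_derivative
          lam * (2 * inner f u)) (at 0)"
    by (auto intro!: derivative_eq_intros)
  have "((\<lambda>t. (1 / real (n+1)) * (\<Sum>i=1..n. v i * l (Y i) (evalH f Kx (X i) + t * evalH u Kx (X i)))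
     + v (n+1) / real (n+1) * l z (evalH f Kx (X (n+1)) + t * evalH u Kx (X (n+1)))
     + v (n+2) / real (n+1) * l y (evalH f Kx (X (n+1)) + t * evalH u Kx (X (n+1)))
     + lam * ((norm f)\<^sup>2 + t * (2 * inner f u) + t\<^sup>2 * (norm u)\<^sup>2)) has_real_derivative
     D1R l lam n X Y Kx y z v f u) (at 0)"
    unfolding D1R_def
    using DERIV_add[OF DERIV_add[OF DERIV_add[OF
       DERIV_cmult[OF s] DERIV_cmult[OF dl[OF z]]] DERIV_cmult[OF dl[OF y]]] q] .
  thus ?thesis unfolding Rbold_line .
qed

lemma D1R_line:
  "D1R l lam n X Y Kx y z v (f + s *\<^sub>R w) u =
     (1 / real (n+1)) * (\<Sum>i=1..n. v i * (deriv (l (Y i)) (evalH f Kx (X i) + s * evalH w Kx (X i)) * evalH u Kx (X i)))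
     + v (n+1) / real (n+1) * (deriv (l z) (evalH f Kx (X (n+1)) + s * evalH w Kx (X (n+1))) * evalH u Kx (X (n+1)))
     + v (n+2) / real (n+1) * (deriv (l y) (evalH f Kx (X (n+1)) + s * evalH w Kx (X (n+1))) * evalH u Kx (X (n+1)))
     + lam * (2 * (inner f u + s * inner w u))"
  unfolding D1R_def evalH_add_scale by (simp add: inner_add_left)

lemma D1R_D2:
  assumes D2: "\<forall>w\<in>Ycal. \<forall>u. (deriv (l w) has_real_derivative deriv (deriv (l w)) u) (at u)"
    and Yin: "\<forall>i\<in>{1..n}. Y i \<in> Ycal" and y: "y \<in> Ycal" and z: "z \<in> Ycal"
  shows "((\<lambda>s. D1R l lam n X Y Kx y z v (f + s *\<^sub>R w) u) has_real_derivative D2R l lam n X Y Kx y z v f u w) (at 0)"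
proof -
  have dl: "((\<lambda>s. deriv (l w') (c + s * d) * e) has_real_derivative deriv (deriv (l w')) c * d * e) (at 0)"
    if "w' \<in> Ycal" for w' c d e
    using DERIV_cmult_right[OF deriv_comp_lin0[of "deriv (l w')" "deriv (deriv (l w'))" c d], of e] D2 that by blast
  have s: "((\<lambda>s. \<Sum>i=1..n. v i * (deriv (l (Y i)) (evalH f Kx (X i) + s * evalH w Kx (X i)) * evalH u Kx (X i))) has_real_derivative
          (\<Sum>i=1..n. v i * (deriv (deriv (l (Y i))) (evalH f Kx (X i)) * evalH w Kx (X i) * evalH u Kx (X i)))) (at 0)"
    by (rule DERIV_sum, rule DERIV_cmult, rule dl) (use Yin in auto)
  have q: "((\<lambda>s. lam * (2 * (inner f u + s * inner w u))) has_real_derivative lam * (2 * inner w u)) (at 0)"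
    by (auto intro!: derivative_eq_intros)
  show ?thesis unfolding D1R_line D2R_def
    using DERIV_add[OF DERIV_add[OF DERIV_add[OF
       DERIV_cmult[OF s] DERIV_cmult[OF dl[OF z]]] DERIV_cmult[OF dl[OF y]]] q] .
qed

lemma Rbold_hess:
  assumes D1: "\<forall>w\<in>Ycal. \<forall>u. (l w has_real_derivative deriv (l w) u) (at u)"
    and D2: "\<forall>w\<in>Ycal. \<forall>u. (deriv (l w) has_real_derivative deriv (deriv (l w)) u) (at u)"
    and Yin: "\<forall>i\<in>{1..n}. Y i \<in> Ycal" and y: "y \<in> Ycal" and z: "z \<in> Ycal"
  shows "deriv (\<lambda>s. deriv (\<lambda>t. Rbold l lam n X Y Kx y z v (f + t *\<^sub>R u + s *\<^sub>R w)) 0) 0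
       = D2R l lam n X Y Kx y z v f u w"
proof -
  have "deriv (\<lambda>t. Rbold l lam n X Y Kx y z v (f + t *\<^sub>R u + s *\<^sub>R w)) 0 = D1R l lam n X Y Kx y z v (f + s *\<^sub>R w) u" for s
  proof -
    have "(\<lambda>t. Rbold l lam n X Y Kx y z v (f + t *\<^sub>R u + s *\<^sub>R w)) = (\<lambda>t. Rbold l lam n X Y Kx y z v ((f + s *\<^sub>R w) + t *\<^sub>R u))"
      by (simp add: add_ac)
    thus ?thesis using DERIV_imp_deriv[OF Rbold_D1[OF D1 Yin y z]] by simp
  qed
  hence "(\<lambda>s. deriv (\<lambda>t. Rbold l lam n X Y Kx y z v (f + t *\<^sub>R u + s *\<^sub>R w)) 0) = (\<lambda>s. D1R l lam n X Y Kx y z v (f + s *\<^sub>R w) u)"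
    by (rule ext)
  thus ?thesis using DERIV_imp_deriv[OF D1R_D2[OF D2 Yin y z]] by simp
qed

lemma evalH_commute: "evalH h Kx x = inner (Kx x) h"
  by (simp add: evalH_def inner_commute)

lemma hess_inner:
  "inner (hess_op l lam n X Y Kx y z v f u) w = D2R l lam n X Y Kx y z v f u w"
  unfolding hess_op_def D2R_def evalH_commute
  by (simp add: inner_add_left inner_sum_left sum_distrib_left inner_commute[of u w] mult_ac)

lemma nonneg_sq: "(0::real) \<le> c \<Longrightarrow> 0 \<le> c * e * e"
  by (simp add: mult.assoc)

lemma D2R_sym: "D2R l lam n X Y Kx y z v f u w = D2R l lam n X Y Kx y z v f w u"
  unfolding D2R_def by (simp add: mult_ac inner_commute)

lemma hess_sym: "inner (hess_op l lam n X Y Kx y z v f u) w = inner u (hess_op l lam n X Y Kx y z v f w)"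
  by (simp add: hess_inner D2R_sym inner_commute[of u])

lemma hess_diff: "hess_op l lam n X Y Kx y z v f (h1 - h2) = hess_op l lam n X Y Kx y z v f h1 - hess_op l lam n X Y Kx y z v f h2"
  unfolding hess_op_def
  by (simp add: inner_diff_right algebra_simps scaleR_diff_left sum_subtractf scaleR_diff_right diff_divide_distrib)

lemma hess_span:
  assumes "h \<in> span (Kx ` X ` {1..n+1})"
  shows "hess_op l lam n X Y Kx y z v f h \<in> span (Kx ` X ` {1..n+1})"
  unfolding hess_op_def
  by (intro span_add span_scale span_sum span_base assms) auto

lemma D2R_pos:
  assumes C: "\<forall>w\<in>Ycal. convex_on UNIV (l w)"
    and D1: "\<forall>w\<in>Ycal. \<forall>u. (l w has_real_derivative deriv (l w) u) (at u)"
    and D2: "\<forall>w\<in>Ycal. \<forall>u. (deriv (l w) has_real_derivative deriv (deriv (l w)) u) (at u)"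
    and Yin: "\<forall>i\<in>{1..n}. Y i \<in> Ycal" and y: "y \<in> Ycal" and z: "z \<in> Ycal" and vn: "\<forall>i. v i \<ge> 0"
  shows "D2R l lam n X Y Kx y z v f h h \<ge> lam * (2 * (norm h)\<^sup>2)"
proof -
  have nn: "deriv (deriv (l w)) c \<ge> 0" if "w \<in> Ycal" for w c
    using convex_d2_nonneg[of "l w"] C D1 D2 that by blast
  have "(\<Sum>i=1..n. v i * (deriv (deriv (l (Y i))) (evalH f Kx (X i)) * evalH h Kx (X i) * evalH h Kx (X i))) \<ge> 0"
    by (rule sum_nonneg) (use Yin vn nn in \<open>auto intro!: mult_nonneg_nonneg nonneg_sq divide_nonneg_nonneg\<close>)
  moreover have "v (n+1) / real (n+1) * (deriv (deriv (l z)) (evalH f Kx (X (n+1))) * evalH h Kx (X (n+1)) * evalH h Kx (X (n+1))) \<ge> 0"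
    using vn nn[OF z] by (auto intro!: mult_nonneg_nonneg nonneg_sq divide_nonneg_nonneg)
  moreover have "v (n+2) / real (n+1) * (deriv (deriv (l y)) (evalH f Kx (X (n+1))) * evalH h Kx (X (n+1)) * evalH h Kx (X (n+1))) \<ge> 0"
    using vn nn[OF y] by (auto intro!: mult_nonneg_nonneg nonneg_sq divide_nonneg_nonneg)
  ultimately show ?thesis unfolding D2R_def
    by (simp add: power2_norm_eq_inner)
qed




lemma penrose_AAB:
  fixes A :: "real mat"
  assumes A: "A \<in> carrier_mat n n" and As: "transpose_mat A = A" and p: "penrose n A B"
  shows "A * (A * B) = A"
proof -
  have B: "B \<in> carrier_mat n n" and ABA: "A * B * A = A" and t: "transpose_mat (A * B) = A * B"
    using p by (auto simp: penrose_def)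
  have "A * B = transpose_mat B * A" using t transpose_mult[OF A B] As by simp
  hence "A * (A * B) = A * (transpose_mat B * A)" by simp
  also have "\<dots> = transpose_mat (A * B * A)"
    using transpose_mult[of "A * B" n n A n] transpose_mult[OF A B] A B As
    by (simp add: assoc_nn[of _ n])
  also have "\<dots> = A" using ABA As by simp
  finally show ?thesis .
qed

lemma penrose_AAB_vec:
  fixes A :: "real mat"
  assumes A: "A \<in> carrier_mat n n" and As: "transpose_mat A = A" and p: "penrose n A B"
    and x: "x \<in> carrier_vec n"
  shows "A *\<^sub>v (A *\<^sub>v (B *\<^sub>v x)) = A *\<^sub>v x"
proof -
  have B: "B \<in> carrier_mat n n" using p by (auto simp: penrose_def)
  have "A *\<^sub>v (A *\<^sub>v (B *\<^sub>v x)) = (A * (A * B)) *\<^sub>v x"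
    using assoc_mult_mat_vec[OF A mult_nn[OF A B] x] assoc_mult_mat_vec[OF A B x] by simp
  thus ?thesis using penrose_AAB[OF A As p] by simp
qed

lemma uvec_nonneg: "\<forall>i. uvec n i \<ge> 0"
  by (simp add: uvec_def)

lemma vec_eq_of_diff0:
  fixes a b :: "real vec"
  assumes "a \<in> carrier_vec N" "b \<in> carrier_vec N" "a - b = 0\<^sub>v N"
  shows "a = b"
proof (rule eq_vecI)
  have db: "dim_vec b = N" using assms(2) by auto
  fix i assume "i < dim_vec b"
  hence i: "i < N" using db by simp
  have "(a - b) $ i = a $ i - b $ i" using i db by simp
  moreover have "(a - b) $ i = 0" by (metis assms(3) i index_zero_vec(1))
  ultimately show "a $ i = b $ i" by simp
qed (use assms in auto)

context
  fixes l :: "real \<Rightarrow> real \<Rightarrow> real"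
    and lam :: real
    and n :: nat
    and X :: "nat \<Rightarrow> 'x"
    and Y :: "nat \<Rightarrow> real"
    and Kx :: "'x \<Rightarrow> 'h::{real_inner, complete_space}"
    and Ycal :: "real set"
    and y z :: real
  assumes lam_pos: "lam > 0"
    and Y_in: "\<forall>i\<in>{1..n}. Y i \<in> Ycal"
    and y_in: "y \<in> Ycal" and z_in: "z \<in> Ycal"
    and convex: "\<forall>w\<in>Ycal. convex_on UNIV (l w)"
    and diff1: "\<forall>w\<in>Ycal. \<forall>u. (l w has_real_derivative deriv (l w) u) (at u)"
    and diff2: "\<forall>w\<in>Ycal. \<forall>u. (deriv (l w) has_real_derivative deriv (deriv (l w)) u) (at u)"
begin

lemma R_ex1: "\<exists>!f. \<forall>g. Rbold l lam n X Y Kx y z (uvec n) f \<le> Rbold l lam n X Y Kx y z (uvec n) g"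
  by (rule strong_convex_min[OF lam_pos Rbold_cont[OF diff1 Y_in y_in z_in]
        Rbold_mid[OF convex Y_in y_in z_in uvec_nonneg] Rbold_bdd[OF convex diff1 Y_in y_in z_in uvec_nonneg lam_pos]])

lemma fhat_min: "\<forall>g. Rbold l lam n X Y Kx y z (uvec n) (fhat l lam n X Y Kx y z) \<le> Rbold l lam n X Y Kx y z (uvec n) g"
  unfolding fhat_def by (rule theI'[OF R_ex1])

lemma fhat_unique: "\<forall>g. Rbold l lam n X Y Kx y z (uvec n) f \<le> Rbold l lam n X Y Kx y z (uvec n) g \<Longrightarrow> f = fhat l lam n X Y Kx y z"
proof -
  assume f: "\<forall>g. Rbold l lam n X Y Kx y z (uvec n) f \<le> Rbold l lam n X Y Kx y z (uvec n) g"
  from R_ex1 obtain f0 where "\<forall>g. Rbold l lam n X Y Kx y z (uvec n) f0 \<le> Rbold l lam n X Y Kx y z (uvec n) g"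
    and u: "\<forall>f'. (\<forall>g. Rbold l lam n X Y Kx y z (uvec n) f' \<le> Rbold l lam n X Y Kx y z (uvec n) g) \<longrightarrow> f' = f0"
    by (rule ex1E)
  have "f = f0" using u f by blast
  moreover have "fhat l lam n X Y Kx y z = f0" using u fhat_min by blast
  ultimately show ?thesis by simp
qed

lemma fhat_repr: "\<exists>a\<in>mat_range (n+1) (gram Kx X n). gvec Kx X (n+1) a = fhat l lam n X Y Kx y z"
proof -
  let ?K = "gram Kx X n" and ?N = "n+1" and ?f = "fhat l lam n X Y Kx y z"
  have K: "?K \<in> carrier_mat ?N ?N" by (rule gram_carrier)
  have Ks: "transpose_mat ?K = ?K" by (rule gram_sym)
  define BK where "BK = mp_pinv ?N ?K"
  have pK: "penrose ?N ?K BK" unfolding BK_def by (rule mp_pinv_penrose[OF K Ks])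
  have BK: "BK \<in> carrier_mat ?N ?N" using pK by (simp add: penrose_def)
  define vv where "vv = vec ?N (\<lambda>i. inner (Kx (X (i+1))) ?f)"
  have vv: "vv \<in> carrier_vec ?N" by (simp add: vv_def)
  have W: "vv \<bullet> w = 0" if w: "w \<in> carrier_vec ?N" and Kw: "?K *\<^sub>v w = 0\<^sub>v ?N" for w
  proof -
    have "vv \<bullet> w = (\<Sum>i<?N. vv $ i * w $ i)" using w by (simp add: scalar_prod_def atLeast0LessThan)
    also have "\<dots> = (\<Sum>i<?N. inner ((w $ i) *\<^sub>R Kx (X (i+1))) ?f)"
      by (rule sum.cong) (simp_all add: vv_def mult.commute)
    also have "\<dots> = inner (gvec Kx X ?N w) ?f" by (simp only: gvec_def inner_sum_left)
    also have "gvec Kx X ?N w = 0" by (rule gram_mult_zero_gvec[OF w Kw])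
    finally show ?thesis by simp
  qed
  define d where "d = BK *\<^sub>v vv"
  have d: "d \<in> carrier_vec ?N" using BK vv by (simp add: d_def)
  define q where "q = vv - ?K *\<^sub>v d"
  have q: "q \<in> carrier_vec ?N" using vv d by (simp add: q_def)
  have Kq: "?K *\<^sub>v q = 0\<^sub>v ?N"
  proof -
    have "?K *\<^sub>v q = ?K *\<^sub>v vv - ?K *\<^sub>v (?K *\<^sub>v d)"
      unfolding q_def using vv d by (simp add: mult_minus_distrib_mat_vec[OF K])
    also have "?K *\<^sub>v (?K *\<^sub>v d) = ?K *\<^sub>v vv" unfolding d_def by (rule penrose_AAB_vec[OF K Ks pK vv])
    finally show ?thesis using vv by simp
  qed
  have "q \<bullet> q = vv \<bullet> q - (?K *\<^sub>v d) \<bullet> q"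
    unfolding q_def[of] using minus_scalar_prod_distrib[OF vv _ q, of "?K *\<^sub>v d"] d
    by (simp add: q_def)
  also have "vv \<bullet> q = 0" by (rule W[OF q Kq])
  also have "(?K *\<^sub>v d) \<bullet> q = d \<bullet> (?K *\<^sub>v q)" by (rule sym_scalar[OF K Ks d q])
  also have "\<dots> = 0" using Kq d by simp
  finally have "q \<bullet> q = 0" by simp
  hence "q = 0\<^sub>v ?N" by (rule self_scalar_zero[OF q])
  hence Kd: "?K *\<^sub>v d = vv" using vec_eq_of_diff0[of vv ?N "?K *\<^sub>v d"] vv d by (simp add: q_def)
  define a where "a = ?K *\<^sub>v (BK *\<^sub>v d)"
  have a_rng: "a \<in> mat_range ?N ?K" unfolding a_def mat_range_def using BK d by auto
  have a: "a \<in> carrier_vec ?N" using BK d by (simp add: a_def)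
  have Ka: "?K *\<^sub>v a = vv" unfolding a_def using penrose_AAB_vec[OF K Ks pK d] Kd by simp
  define ga where "ga = gvec Kx X ?N a"
  have ev: "inner (Kx (X (i+1))) ga = inner (Kx (X (i+1))) ?f" if "i < ?N" for i
  proof -
    have "(?K *\<^sub>v a) $ i = inner (Kx (X (i+1))) ga" unfolding ga_def by (rule gram_mult[OF a that])
    thus ?thesis using Ka that by (simp add: vv_def)
  qed
  have orth: "inner ga (?f - ga) = 0"
  proof -
    have "inner ga (?f - ga) = (\<Sum>j<?N. a $ j * inner (Kx (X (j+1))) (?f - ga))"
      by (simp only: ga_def gvec_def inner_sum_left inner_scaleR_left)
    also have "\<dots> = 0" using ev by (simp add: inner_diff_right)
    finally show ?thesis .
  qed
  have nrm: "(norm ?f)\<^sup>2 = (norm ga)\<^sup>2 + (norm (?f - ga))\<^sup>2"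
  proof -
    define dd where "dd = ?f - ga"
    have fd: "?f = ga + dd" by (simp add: dd_def)
    have "(norm ?f)\<^sup>2 = inner ?f ?f" by (rule power2_norm_eq_inner)
    also have "inner ?f ?f = inner (ga + dd) (ga + dd)" by (simp only: fd)
    also have "\<dots> = (norm ga)\<^sup>2 + (norm dd)\<^sup>2 + 2 * inner ga dd"
      by (simp only: inner_add_left inner_add_right power2_norm_eq_inner inner_commute[of dd ga])
    finally have c1: "(norm ?f)\<^sup>2 = (norm ga)\<^sup>2 + (norm dd)\<^sup>2 + 2 * inner ga dd" .
    have "inner ga dd = 0" unfolding dd_def by (rule orth)
    hence "(norm ?f)\<^sup>2 = (norm ga)\<^sup>2 + (norm dd)\<^sup>2" using c1 by linarith
    thus ?thesis unfolding dd_def .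
  qed
  have evX: "evalH ga Kx (X i) = evalH ?f Kx (X i)" if "i \<in> {1..n+1}" for i
  proof -
    have i1: "i - 1 < n+1" "i - 1 + 1 = i" using that by auto
    show ?thesis unfolding evalH_commute using ev[OF i1(1)] unfolding i1(2) .
  qed
  have "Rbold l lam n X Y Kx y z (uvec n) ga \<le> Rbold l lam n X Y Kx y z (uvec n) ?f"
  proof -
    have s: "(\<Sum>i=1..n. uvec n i * l (Y i) (evalH ga Kx (X i))) = (\<Sum>i=1..n. uvec n i * l (Y i) (evalH ?f Kx (X i)))"
      by (rule sum.cong) (use evX in auto)
    have e1: "evalH ga Kx (X (n+1)) = evalH ?f Kx (X (n+1))" by (rule evX) simp
    have "(norm ga)\<^sup>2 \<le> (norm ?f)\<^sup>2" using nrm by simp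
    hence "lam * (norm ga)\<^sup>2 \<le> lam * (norm ?f)\<^sup>2" using lam_pos by (simp add: mult_left_mono)
    thus ?thesis unfolding Rbold_def s e1 by (rule add_left_mono)
  qed
  hence "\<forall>g. Rbold l lam n X Y Kx y z (uvec n) ga \<le> Rbold l lam n X Y Kx y z (uvec n) g"
    using fhat_min by (meson order_trans)
  hence gf: "ga = ?f" by (rule fhat_unique)
  show ?thesis
  proof (rule bexI[OF _ a_rng])
    show "gvec Kx X (n+1) a = ?f" using gf unfolding ga_def .
  qed
qed

lemma mat_range_gram_carrier: "b \<in> mat_range (n+1) (gram Kx X n) \<Longrightarrow> b \<in> carrier_vec (n+1)"
  unfolding mat_range_def by auto

lemma ahat_props: "ahat l lam n X Y Kx y z \<in> mat_range (n+1) (gram Kx X n)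
   \<and> gvec Kx X (n+1) (ahat l lam n X Y Kx y z) = fhat l lam n X Y Kx y z"
proof -
  let ?K = "gram Kx X n" and ?N = "n+1" and ?f = "fhat l lam n X Y Kx y z"
  let ?R = "Rbold l lam n X Y Kx y z (uvec n)" and ?G = "Rhat l lam n X Y Kx y z (uvec n)"
  have K: "?K \<in> carrier_mat ?N ?N" by (rule gram_carrier)
  have Ks: "transpose_mat ?K = ?K" by (rule gram_sym)
  obtain a where a: "a \<in> mat_range ?N ?K" and ga: "gvec Kx X ?N a = ?f" using fhat_repr by blast
  have ac: "a \<in> carrier_vec ?N" using mat_range_gram_carrier[OF a] .
  have Pa: "a \<in> mat_range ?N ?K \<and> (\<forall>b\<in>mat_range ?N ?K. ?G a \<le> ?G b)"
  proof (intro conjI ballI a)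
    fix b assume b: "b \<in> mat_range ?N ?K"
    have bc: "b \<in> carrier_vec ?N" using mat_range_gram_carrier[OF b] .
    have "?G a = ?R (gvec Kx X ?N a)" by (rule Rhat_gvec[OF ac])
    also have "\<dots> = ?R ?f" by (simp only: ga)
    also have "\<dots> \<le> ?R (gvec Kx X ?N b)" using fhat_min by blast
    also have "\<dots> = ?G b" by (rule Rhat_gvec[OF bc, symmetric])
    finally show "?G a \<le> ?G b" .
  qed
  have uniq: "a' = a" if Pa': "a' \<in> mat_range ?N ?K \<and> (\<forall>b\<in>mat_range ?N ?K. ?G a' \<le> ?G b)" for a'
  proof -
    have a'r: "a' \<in> mat_range ?N ?K" using Pa' by blast
    have a'c: "a' \<in> carrier_vec ?N" using mat_range_gram_carrier[OF a'r] .
    have "?R (gvec Kx X ?N a') = ?G a'" by (rule Rhat_gvec[OF a'c, symmetric])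
    also have "\<dots> \<le> ?G a" using Pa' a by blast
    also have "\<dots> = ?R (gvec Kx X ?N a)" by (rule Rhat_gvec[OF ac])
    also have "\<dots> = ?R ?f" by (simp only: ga)
    finally have le: "?R (gvec Kx X ?N a') \<le> ?R ?f" .
    have "\<forall>g. ?R (gvec Kx X ?N a') \<le> ?R g" using le fhat_min by (meson order_trans)
    hence ga': "gvec Kx X ?N a' = ?f" by (rule fhat_unique)
    have "gvec Kx X ?N (a' - a) = 0" using gvec_minus[OF a'c ac, of Kx X] ga ga' by simp
    hence K0: "?K *\<^sub>v (a' - a) = 0\<^sub>v ?N" using gvec_zero_gram[of "a' - a" n Kx X] a'c ac by simp
    obtain c' where c': "c' \<in> carrier_vec ?N" "a' = ?K *\<^sub>v c'" using a'r unfolding mat_range_def by blast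
    obtain c where c: "c \<in> carrier_vec ?N" "a = ?K *\<^sub>v c" using a unfolding mat_range_def by blast
    define e where "e = c' - c"
    have e: "e \<in> carrier_vec ?N" using c c' by (simp add: e_def)
    have ae: "a' - a = ?K *\<^sub>v e" unfolding e_def using c c' by (simp add: mult_minus_distrib_mat_vec[OF K])
    have "(?K *\<^sub>v e) \<bullet> (?K *\<^sub>v e) = e \<bullet> (?K *\<^sub>v (?K *\<^sub>v e))" by (rule sym_scalar[OF K Ks e]) simp
    also have "\<dots> = 0" using K0 ae e by simp
    finally have "?K *\<^sub>v e = 0\<^sub>v ?N" using self_scalar_zero[of "?K *\<^sub>v e" ?N] by simp
    hence "a' - a = 0\<^sub>v ?N" using ae by simp
    thus "a' = a" using vec_eq_of_diff0[OF a'c ac] by simp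
  qed
  have "ahat l lam n X Y Kx y z = a"
    unfolding ahat_def by (rule the_equality, rule Pa, rule uniq, assumption)
  thus ?thesis using a ga by simp
qed

lemma main17:
  "Ibold l lam n X Y Kx y z z' = (\<Sum>i=1..n+1. (Ivec l lam n X Y Kx y z z' $ (i-1)) *\<^sub>R Kx (X i))"
proof -
  let ?K = "gram Kx X n" and ?N = "n+1" and ?f = "fhat l lam n X Y Kx y z" and ?a = "ahat l lam n X Y Kx y z"
  let ?R = "Rbold l lam n X Y Kx y z (uvec n)" and ?G = "Rhat l lam n X Y Kx y z (uvec n)"
  let ?T = "hess_op l lam n X Y Kx y z (uvec n) ?f"
  let ?S = "Kx ` X ` {1..n+1}"
  define H where "H = hessian ?N ?G ?a"
  have K: "?K \<in> carrier_mat ?N ?N" by (rule gram_carrier)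
  have Ks: "transpose_mat ?K = ?K" by (rule gram_sym)
  have ar: "?a \<in> mat_range ?N ?K" and ga: "gvec Kx X ?N ?a = ?f" using ahat_props by auto
  have ac: "?a \<in> carrier_vec ?N" using mat_range_gram_carrier[OF ar] .
  have Hc: "H \<in> carrier_mat ?N ?N" unfolding H_def hessian_def by (rule mat_carrier)
  have Hent: "H $$ (j,k) = inner (?T (Kx (X (j+1)))) (Kx (X (k+1)))" if jk: "j < ?N" "k < ?N" for j k
  proof -
    let ?u = "Kx (X (j+1))" and ?w = "Kx (X (k+1))"
    have eq: "?G (?a + t \<cdot>\<^sub>v unit_vec ?N j + s \<cdot>\<^sub>v unit_vec ?N k) = ?R (?f + t *\<^sub>R ?u + s *\<^sub>R ?w)" for t s
    proof -
      have c1: "t \<cdot>\<^sub>v unit_vec ?N j \<in> carrier_vec ?N" "s \<cdot>\<^sub>v unit_vec ?N k \<in> carrier_vec ?N" by simp_all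
      have c2: "?a + t \<cdot>\<^sub>v unit_vec ?N j \<in> carrier_vec ?N" using ac by simp
      have c3: "?a + t \<cdot>\<^sub>v unit_vec ?N j + s \<cdot>\<^sub>v unit_vec ?N k \<in> carrier_vec ?N" using c2 by simp
      have "gvec Kx X ?N (?a + t \<cdot>\<^sub>v unit_vec ?N j + s \<cdot>\<^sub>v unit_vec ?N k)
          = gvec Kx X ?N ?a + gvec Kx X ?N (t \<cdot>\<^sub>v unit_vec ?N j) + gvec Kx X ?N (s \<cdot>\<^sub>v unit_vec ?N k)"
        using gvec_add[OF c2 c1(2), of Kx X] gvec_add[OF ac c1(1), of Kx X] by simp
      also have "\<dots> = ?f + t *\<^sub>R ?u + s *\<^sub>R ?w"
        using gvec_smult[of "unit_vec ?N j" ?N Kx X t] gvec_smult[of "unit_vec ?N k" ?N Kx X s]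
          gvec_unit[OF jk(1), of Kx X] gvec_unit[OF jk(2), of Kx X] ga by simp
      finally have gq: "gvec Kx X ?N (?a + t \<cdot>\<^sub>v unit_vec ?N j + s \<cdot>\<^sub>v unit_vec ?N k) = ?f + t *\<^sub>R ?u + s *\<^sub>R ?w" .
      show ?thesis unfolding Rhat_gvec[OF c3] gq ..
    qed
    have "H $$ (j,k) = deriv (\<lambda>s. deriv (\<lambda>t. ?G (?a + t \<cdot>\<^sub>v unit_vec ?N j + s \<cdot>\<^sub>v unit_vec ?N k)) 0) 0"
      unfolding H_def hessian_def using jk by simp
    also have "\<dots> = deriv (\<lambda>s. deriv (\<lambda>t. ?R (?f + t *\<^sub>R ?u + s *\<^sub>R ?w)) 0) 0" by (simp only: eq)
    also have "\<dots> = D2R l lam n X Y Kx y z (uvec n) ?f ?u ?w" by (rule Rbold_hess[OF diff1 diff2 Y_in y_in z_in])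
    also have "\<dots> = inner (?T ?u) ?w" by (rule hess_inner[symmetric])
    finally show ?thesis .
  qed
  have Hs: "transpose_mat H = H"
  proof (rule eq_matI)
    fix j k assume "j < dim_row H" "k < dim_col H"
    hence jk: "j < ?N" "k < ?N" using Hc by auto
    have "H $$ (k, j) = H $$ (j, k)" unfolding Hent[OF jk] Hent[OF jk(2,1)]
      by (simp only: hess_sym inner_commute[of "Kx (X (j+1))"])
    thus "transpose_mat H $$ (j, k) = H $$ (j, k)" using jk Hc by simp
  qed (use Hc in auto)
  have Hmul: "(H *\<^sub>v b) $ j = inner (Kx (X (j+1))) (?T (gvec Kx X ?N b))" if b: "b \<in> carrier_vec ?N" and j: "j < ?N" for b j
  proof -
    have "(H *\<^sub>v b) $ j = (\<Sum>k<?N. H $$ (j,k) * b $ k)"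
      using Hc b j by (simp add: scalar_prod_def atLeast0LessThan)
    also have "\<dots> = (\<Sum>k<?N. inner (?T (Kx (X (j+1)))) ((b $ k) *\<^sub>R Kx (X (k+1))))"
    proof (rule sum.cong[OF refl])
      fix k assume "k \<in> {..<?N}"
      hence k: "k < ?N" by simp
      show "H $$ (j,k) * b $ k = inner (?T (Kx (X (j+1)))) ((b $ k) *\<^sub>R Kx (X (k+1)))"
        unfolding Hent[OF j k] by (simp add: mult.commute)
    qed
    also have "\<dots> = inner (?T (Kx (X (j+1)))) (gvec Kx X ?N b)"
      by (simp only: gvec_def inner_sum_right)
    also have "\<dots> = inner (Kx (X (j+1))) (?T (gvec Kx X ?N b))" by (rule hess_sym)
    finally show ?thesis .
  qed
  have T0: "h = 0" if "?T h = 0" for h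
  proof -
    have "lam * (2 * (norm h)\<^sup>2) \<le> D2R l lam n X Y Kx y z (uvec n) ?f h h"
      by (rule D2R_pos[OF convex diff1 diff2 Y_in y_in z_in uvec_nonneg])
    also have "\<dots> = inner (?T h) h" by (rule hess_inner[symmetric])
    also have "\<dots> = 0" using that by simp
    finally have "(norm h)\<^sup>2 \<le> 0" using lam_pos by (simp add: mult_le_0_iff)
    thus ?thesis by simp
  qed
  have Tinj: "h1 = h2" if "?T h1 = ?T h2" for h1 h2
  proof -
    have "?T (h1 - h2) = 0" using that by (simp only: hess_diff) simp
    hence "h1 - h2 = 0" by (rule T0)
    thus ?thesis by simp
  qed
  have orthS: "h = 0" if hs: "h \<in> span ?S" and ho: "\<forall>j<?N. inner (Kx (X (j+1))) h = 0" for h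
  proof (rule orth_span_zero[OF hs])
    fix s assume "s \<in> ?S"
    then obtain i where i: "i \<in> {1..n+1}" and si: "s = Kx (X i)" by blast
    have "i - 1 < ?N" "i - 1 + 1 = i" using i by auto
    thus "inner s h = 0" using ho si by metis
  qed
  define BH where "BH = mp_pinv ?N H"
  have pH: "penrose ?N H BH" unfolding BH_def by (rule mp_pinv_penrose[OF Hc Hs])
  have BHc: "BH \<in> carrier_mat ?N ?N" using pH by (simp add: penrose_def)
  define x where "x = col ?K n"
  have xc: "x \<in> carrier_vec ?N" unfolding x_def by (rule col_carrier_vec[OF _ K]) simp
  have xK: "x = ?K *\<^sub>v unit_vec ?N n" unfolding x_def by (rule col_as_mult[OF K]) simp
  define b where "b = BH *\<^sub>v x"
  have bc: "b \<in> carrier_vec ?N" using BHc xc by (simp add: b_def)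
  have Hbc: "H *\<^sub>v b \<in> carrier_vec ?N" using Hc bc by simp
  have Hb: "H *\<^sub>v b = x"
  proof -
    define q where "q = x - H *\<^sub>v b"
    have qc: "q \<in> carrier_vec ?N" using xc Hbc by (simp add: q_def)
    have Hq: "H *\<^sub>v q = 0\<^sub>v ?N"
    proof -
      have "H *\<^sub>v q = H *\<^sub>v x - H *\<^sub>v (H *\<^sub>v b)" unfolding q_def by (rule mult_minus_distrib_mat_vec[OF Hc xc Hbc])
      also have "H *\<^sub>v (H *\<^sub>v b) = H *\<^sub>v x" unfolding b_def by (rule penrose_AAB_vec[OF Hc Hs pH xc])
      finally show ?thesis using Hc xc by simp
    qed
    have "?T (gvec Kx X ?N q) = 0"
    proof (rule orthS)
      show "?T (gvec Kx X ?N q) \<in> span ?S" by (rule hess_span[OF gvec_span])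
      show "\<forall>j<?N. inner (Kx (X (j+1))) (?T (gvec Kx X ?N q)) = 0"
      proof (intro allI impI)
        fix j assume j: "j < ?N"
        have "inner (Kx (X (j+1))) (?T (gvec Kx X ?N q)) = (H *\<^sub>v q) $ j" by (rule Hmul[OF qc j, symmetric])
        also have "\<dots> = 0" using Hq j by simp
        finally show "inner (Kx (X (j+1))) (?T (gvec Kx X ?N q)) = 0" .
      qed
    qed
    hence "gvec Kx X ?N q = 0" by (rule T0)
    hence Kq: "?K *\<^sub>v q = 0\<^sub>v ?N" by (rule gvec_zero_gram[OF qc])
    have "q \<bullet> q = q \<bullet> x - q \<bullet> (H *\<^sub>v b)"
      unfolding q_def[symmetric, of] by (rule scalar_prod_minus_distrib[OF qc xc Hbc, folded q_def])
    also have "q \<bullet> (H *\<^sub>v b) = (H *\<^sub>v q) \<bullet> b" by (rule sym_scalar[OF Hc Hs qc bc, symmetric])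
    also have "\<dots> = 0" using Hq bc by simp
    also have "q \<bullet> x = (?K *\<^sub>v q) \<bullet> unit_vec ?N n" unfolding xK by (rule sym_scalar[OF K Ks qc, symmetric]) simp
    also have "\<dots> = 0" using Kq by simp
    finally have "q \<bullet> q = 0" by simp
    hence "q = 0\<^sub>v ?N" by (rule self_scalar_zero[OF qc])
    thus ?thesis using vec_eq_of_diff0[OF xc Hbc] by (simp add: q_def)
  qed
  define g where "g = gvec Kx X ?N b"
  have gsp: "g \<in> span ?S" unfolding g_def by (rule gvec_span)
  have Tg: "?T g = Kx (X (n+1))"
  proof -
    have "?T g - Kx (X (n+1)) = 0"
    proof (rule orthS)
      show "?T g - Kx (X (n+1)) \<in> span ?S"
        by (intro span_diff hess_span gsp span_base) auto
      show "\<forall>j<?N. inner (Kx (X (j+1))) (?T g - Kx (X (n+1))) = 0"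
      proof (intro allI impI)
        fix j assume j: "j < ?N"
        have "inner (Kx (X (j+1))) (?T g) = (H *\<^sub>v b) $ j" unfolding g_def by (rule Hmul[OF bc j, symmetric])
        also have "\<dots> = x $ j" by (simp only: Hb)
        also have "\<dots> = inner (Kx (X (j+1))) (Kx (X (n+1)))" unfolding x_def using j by (simp add: gram_index)
        finally show "inner (Kx (X (j+1))) (?T g - Kx (X (n+1))) = 0" by (simp add: inner_diff_right)
      qed
    qed
    thus ?thesis by simp
  qed
  have RI: "restr_inv ?T (span ?S) (Kx (X (n+1))) = g"
    unfolding restr_inv_def
  proof (rule the_equality)
    show "g \<in> span ?S \<and> ?T g = Kx (X (n+1))" using gsp Tg by blast
    fix g' assume "g' \<in> span ?S \<and> ?T g' = Kx (X (n+1))"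
    hence "?T g' = ?T g" using Tg by simp
    thus "g' = g" by (rule Tinj)
  qed
  have alpha: "?a \<bullet> col ?K n = evalH ?f Kx (X (n+1))"
    using gram_col[OF ac, of n Kx X] ga by (simp add: evalH_def)
  define c where "c = - (1 / real (n+1)) * deriv (l z') (evalH ?f Kx (X (n+1)))"
  have Iv: "Ivec l lam n X Y Kx y z z' = c \<cdot>\<^sub>v b"
    unfolding Ivec_def Let_def alpha c_def b_def BH_def H_def x_def ..
  have Ib: "Ibold l lam n X Y Kx y z z' = c *\<^sub>R g"
    unfolding Ibold_def Let_def RI c_def ..
  have "(\<Sum>i=1..n+1. (Ivec l lam n X Y Kx y z z' $ (i-1)) *\<^sub>R Kx (X i))
      = (\<Sum>i=0..n. (Ivec l lam n X Y Kx y z z' $ i) *\<^sub>R Kx (X (i+1)))"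
    using sum.shift_bounds_cl_Suc_ivl[of "\<lambda>i. (Ivec l lam n X Y Kx y z z' $ (i-1)) *\<^sub>R Kx (X i)" 0 n] by simp
  also have "\<dots> = (\<Sum>i<?N. (c * b $ i) *\<^sub>R Kx (X (i+1)))"
    unfolding atLeast0AtMost lessThan_Suc_atMost[symmetric] Suc_eq_plus1
    by (rule sum.cong[OF refl]) (use bc in \<open>simp add: Iv\<close>)
  also have "\<dots> = c *\<^sub>R g" by (simp only: g_def gvec_def scaleR_sum_right scaleR_scaleR)
  finally show ?thesis using Ib by simp
qed

end


theorem lemma17:
  fixes l :: "real \<Rightarrow> real \<Rightarrow> real"
    and lam \<beta> :: real
    and n :: nat
    and X :: "nat \<Rightarrow> 'x::euclidean_space"
    and Y :: "nat \<Rightarrow> real"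
    and Kx :: "'x \<Rightarrow> 'h::{real_inner, complete_space}"
    and Ycal :: "real set"
    and y z z' :: real
  assumes lam_pos: "lam > 0"
    and Y_in: "\<forall>i\<in>{1..n}. Y i \<in> Ycal"
    and y_in: "y \<in> Ycal" and z_in: "z \<in> Ycal" and z'_in: "z' \<in> Ycal"
    and convex: "\<forall>w\<in>Ycal. convex_on UNIV (l w)"
    and diff1: "\<forall>w\<in>Ycal. \<forall>u. (l w has_real_derivative deriv (l w) u) (at u)"
    and diff2: "\<forall>w\<in>Ycal. \<forall>u. (deriv (l w) has_real_derivative deriv (deriv (l w)) u) (at u)"
    and cont2: "\<forall>w\<in>Ycal. continuous_on UNIV (deriv (deriv (l w)))"
    and lip: "\<forall>w\<in>Ycal. \<beta>-lipschitz_on UNIV (deriv (l w))"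
  shows "Ibold l lam n X Y Kx y z z' =
           (\<Sum>i=1..n+1. (Ivec l lam n X Y Kx y z z' $ (i-1)) *\<^sub>R Kx (X i))"
  using main17[OF lam_pos Y_in y_in z_in convex diff1 diff2] .

end
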